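(* Let $n,k\ge1$ be integers and $\lambda>0$. Let $E$ be the event that each row $\{1,\dots\}\ni i\le n$ of $\Pi^{(\lambda)}_{nk,n}$ contains at least $k$ points, i.e. $\mathrm{card}\big(\Pi^{(\lambda)}_{nk,n}\cap([0,nk]\times\{i\})\big)\ge k$ for all $1\le i\le n$. Then $S_{k;n}$ and $\Pi^{(\lambda)}$ can be defined on a common probability space so that almost surely $$\mathcal L_\le(S_{k;n})\le\mathcal L_\le(\Pi^{(\lambda)}_{nk,n})+nk\,(1-\mathbf 1_E).$$
   Context: A $k$-multiset permutation of size $n$ is a word $s=(s(1),\dots,s(kn))$ with letters in $\{1,\dots,n\}$ in which each letter appears exactly $k$ times, identified with the point set $\{(i,s(i)):1\le i\le kn\}$; $S_{k;n}$ is a uniformly random one. For $\lambda>0$, $(\Pi_i^{(\lambda)})_{i\ge1}$ are independent homogeneous Poisson point processes of intensity $\lambda$ on $(0,\infty)$, $\Pi^{(\lambda)}=\bigcup_i\Pi_i^{(\lambda)}\times\{i\}$, and $\Pi^{(\lambda)}_{x,t}=\Pi^{(\lambda)}\cap([0,x]\times\{1,\dots,t\})$. $(a,b)\preccurlyeq(a',b')$ iff $a<a'$ and $b\le b'$; $\mathcal L_\le(\mathcal P)$ is the maximal length of a chain $P_1\preccurlyeq\dots\preccurlyeq P_L$ in a finite point set $\mathcal P$. *)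

theory Defs
  imports "HOL-Probability.Probability"
begin

definition multiset_perms :: "nat \<Rightarrow> nat \<Rightarrow> nat list set" where
  "multiset_perms n k =
     {s. length s = k * n \<and> set s \<subseteq> {1..n} \<and> (\<forall>a\<in>{1..n}. count (mset s) a = k)}"

definition word_points :: "nat list \<Rightarrow> (real \<times> nat) set" where
  "word_points s = {(real (j + 1), s ! j) | j. j < length s}"

definition chain_prec :: "real \<times> nat \<Rightarrow> real \<times> nat \<Rightarrow> bool" where
  "chain_prec p q \<longleftrightarrow> fst p < fst q \<and> snd p \<le> snd q"

definition max_chain_len :: "(real \<times> nat) set \<Rightarrow> nat" where
  "max_chain_len P = Max {length c | c. set c \<subseteq> P \<and> sorted_wrt chain_prec c}"

text \<open>Poisson point process via arrival times: row i has points
  T_i(m) = sum_{j<=m} G(i,j), m = 0,1,2,..., where the G(i,j) are iid Exp(lambda)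
  inter-arrival times.  ppp_window G x t is the restriction of the process to
  [0,x] x {1..t}.\<close>
definition ppp_window :: "(nat \<times> nat \<Rightarrow> real) \<Rightarrow> real \<Rightarrow> nat \<Rightarrow> (real \<times> nat) set" where
  "ppp_window G x t =
     {(a, i). 1 \<le> i \<and> i \<le> t \<and> 0 \<le> a \<and> a \<le> x \<and> (\<exists>m. a = (\<Sum>j\<le>m. G (i, j)))}"

end

theory Submission
  imports Defs
begin

definition Expo :: "real \<Rightarrow> real measure" where
  "Expo l = density lborel (exponential_density l)"
definition QQ :: "real \<Rightarrow> (nat \<times> nat \<Rightarrow> real) measure" where
  "QQ l = PiM UNIV (\<lambda>_. Expo l)"

lemma prob_Expo: "0 < l \<Longrightarrow> prob_space (Expo l)"
  unfolding Expo_def by (rule prob_space_exponential_density)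

lemma sets_Expo[simp, measurable_cong]: "sets (Expo l) = sets borel"
  by (simp add: Expo_def)
lemma space_Expo[simp]: "space (Expo l) = UNIV"
  by (simp add: Expo_def)

lemma pps_QQ: "0 < l \<Longrightarrow> product_prob_space (\<lambda>_. Expo l)"
  by (simp add: product_prob_space_def product_sigma_finite_def prob_Expo prob_space_imp_sigma_finite
     product_prob_space_axioms_def)

lemma prob_QQ: "0 < l \<Longrightarrow> prob_space (QQ l)"
  unfolding QQ_def by (rule prob_space_PiM) (simp add: prob_Expo)

lemma space_QQ[simp]: "space (QQ l) = UNIV"
  by (simp add: QQ_def space_PiM)

lemma QQ_comp_meas[measurable]: "(\<lambda>H. H i) \<in> borel_measurable (QQ l)"
  unfolding QQ_def
  by (metis (no_types) UNIV_I measurable_component_singleton sets_Expo measurable_cong_sets)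

lemma emeasure_QQ_emb:
  assumes l: "0 < l" and J: "finite J" and F: "\<And>j. j \<in> J \<Longrightarrow> F j \<in> sets borel"
  shows "emeasure (QQ l) {H. \<forall>j\<in>J. H j \<in> F j} = (\<Prod>j\<in>J. emeasure (Expo l) (F j))"
proof -
  interpret product_prob_space "\<lambda>_. Expo l" UNIV using pps_QQ[OF l] .
  have "emeasure (QQ l) {x\<in>space (QQ l). \<forall>j\<in>J. x j \<in> F j} = (\<Prod>j\<in>J. emeasure (Expo l) (F j))"
    unfolding QQ_def by (rule emeasure_PiM_Collect) (use J F in auto)
  then show ?thesis by simp
qed

lemma sets_QQ_cyl:
  assumes "finite J" "\<And>j. j \<in> J \<Longrightarrow> F j \<in> sets borel"
  shows "{H. \<forall>j\<in>J. H j \<in> F j} \<in> sets (QQ l)"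
proof (cases "J = {}")
  case True
  then show ?thesis using sets.top[of "QQ l"] by simp
next
  case False
  have "{H. \<forall>j\<in>J. H j \<in> F j} = (\<Inter>j\<in>J. (\<lambda>H. H j) -` F j \<inter> space (QQ l))"
    using False by auto
  also have "\<dots> \<in> sets (QQ l)"
  proof (rule sets.finite_INT)
    fix j assume "j \<in> J"
    then show "(\<lambda>H. H j) -` F j \<inter> space (QQ l) \<in> sets (QQ l)"
      using assms(2) by (intro measurable_sets[OF QQ_comp_meas]) auto
  qed (use False assms in auto)
  finally show ?thesis .
qed

lemma QQ_eqI:
  assumes l: "0 < l" and sets: "sets N = sets (QQ l)"
    and eq: "\<And>J F. finite J \<Longrightarrow> (\<And>j. j \<in> J \<Longrightarrow> F j \<in> sets borel) \<Longrightarrow>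
       emeasure N {H. \<forall>j\<in>J. H j \<in> F j} = (\<Prod>j\<in>J. emeasure (Expo l) (F j))"
  shows "N = QQ l"
proof -
  interpret product_prob_space "\<lambda>_. Expo l" UNIV using pps_QQ[OF l] .
  show ?thesis unfolding QQ_def
  proof (rule PiM_eq)
    show "sets N = sets (Pi\<^sub>M UNIV (\<lambda>_. Expo l))" using sets by (simp add: QQ_def)
  next
    fix J :: "(nat\<times>nat) set" and F :: "nat\<times>nat \<Rightarrow> real set" assume J: "finite J" "J \<subseteq> UNIV" and F: "\<And>j. j \<in> J \<Longrightarrow> F j \<in> sets (Expo l)"
    have "prod_emb UNIV (\<lambda>_. Expo l) J (Pi\<^sub>E J F) = {H. \<forall>j\<in>J. H j \<in> F j}"
      by (auto simp: prod_emb_def space_PiM PiE_iff)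
    then show "emeasure N (prod_emb UNIV (\<lambda>_. Expo l) J (Pi\<^sub>E J F)) = (\<Prod>j\<in>J. emeasure (Expo l) (F j))"
      using eq[OF J(1)] F by simp
  qed
qed

lemma meas_upd[measurable]: "(\<lambda>(y,H). H(p:=y)) \<in> measurable (Expo l \<Otimes>\<^sub>M QQ l) (QQ l)"
proof -
  have "(\<lambda>\<omega> i. (\<lambda>(y, H). H(p := y)) \<omega> i) \<in> measurable (Expo l \<Otimes>\<^sub>M QQ l) (QQ l)"
    unfolding QQ_def
    apply (rule measurable_PiM_single')
     apply (case_tac "i = p")
      apply (simp add: split_beta)
     apply (simp add: split_beta)
    apply (simp add: space_PiM)
    done
  then show ?thesis by simp
qed

lemma QQ_resample:
  assumes l: "0 < l"
  shows "distr (Expo l \<Otimes>\<^sub>M QQ l) (QQ l) (\<lambda>(y,H). H(p:=y)) = QQ l"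
proof (rule QQ_eqI[OF l])
  show "sets (distr (Expo l \<Otimes>\<^sub>M QQ l) (QQ l) (\<lambda>(y,H). H(p:=y))) = sets (QQ l)" by simp
next
  fix J :: "(nat\<times>nat) set" and F :: "nat\<times>nat \<Rightarrow> real set" assume J: "finite J" and F: "\<And>j. j \<in> J \<Longrightarrow> F j \<in> sets borel"
  interpret E: prob_space "Expo l" using prob_Expo[OF l] .
  interpret Q: prob_space "QQ l" using prob_QQ[OF l] .
  interpret pair_sigma_finite "Expo l" "QQ l" by unfold_locales
  have mJ: "{H. \<forall>j\<in>J. H j \<in> F j} \<in> sets (QQ l)" if "finite J" "\<And>j. j \<in> J \<Longrightarrow> F j \<in> sets borel" for J F
    using sets_QQ_cyl that by blast
  show "emeasure (distr (Expo l \<Otimes>\<^sub>M QQ l) (QQ l) (\<lambda>(y,H). H(p:=y))) {H. \<forall>j\<in>J. H j \<in> F j} =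
        (\<Prod>j\<in>J. emeasure (Expo l) (F j))"
  proof (cases "p \<in> J")
    case True
    have "(\<lambda>(y,H). H(p:=y)) -` {H. \<forall>j\<in>J. H j \<in> F j} \<inter> space (Expo l \<Otimes>\<^sub>M QQ l)
          = F p \<times> {H. \<forall>j\<in>J-{p}. H j \<in> F j}"
      using True by (auto simp: space_pair_measure; metis)
    then have "emeasure (distr (Expo l \<Otimes>\<^sub>M QQ l) (QQ l) (\<lambda>(y,H). H(p:=y))) {H. \<forall>j\<in>J. H j \<in> F j}
        = emeasure (Expo l \<Otimes>\<^sub>M QQ l) (F p \<times> {H. \<forall>j\<in>J-{p}. H j \<in> F j})"
      using J F by (subst emeasure_distr) (auto intro: mJ[OF J F] mJ[of "J-{p}" F])
    also have "\<dots> = emeasure (Expo l) (F p) * emeasure (QQ l) {H. \<forall>j\<in>J-{p}. H j \<in> F j}"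
      using True F J by (intro Q.emeasure_pair_measure_Times) (auto intro: mJ[OF J F] mJ[of "J-{p}" F])
    also have "\<dots> = emeasure (Expo l) (F p) * (\<Prod>j\<in>J-{p}. emeasure (Expo l) (F j))"
      using J F by (subst emeasure_QQ_emb[OF l]) auto
    also have "\<dots> = (\<Prod>j\<in>J. emeasure (Expo l) (F j))"
      using True J by (simp add: prod.remove)
    finally show ?thesis .
  next
    case False
    have "(\<lambda>(y,H). H(p:=y)) -` {H. \<forall>j\<in>J. H j \<in> F j} \<inter> space (Expo l \<Otimes>\<^sub>M QQ l)
          = UNIV \<times> {H. \<forall>j\<in>J. H j \<in> F j}"
      using False by (auto simp: space_pair_measure; metis)
    then have "emeasure (distr (Expo l \<Otimes>\<^sub>M QQ l) (QQ l) (\<lambda>(y,H). H(p:=y))) {H. \<forall>j\<in>J. H j \<in> F j}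
        = emeasure (Expo l \<Otimes>\<^sub>M QQ l) (UNIV \<times> {H. \<forall>j\<in>J. H j \<in> F j})"
      using J F by (subst emeasure_distr) (auto intro: mJ[OF J F] mJ[of "J-{p}" F])
    also have "\<dots> = emeasure (Expo l) UNIV * emeasure (QQ l) {H. \<forall>j\<in>J. H j \<in> F j}"
      using F J by (intro Q.emeasure_pair_measure_Times) (auto intro: mJ[OF J F] mJ[of "J-{p}" F])
    also have "\<dots> = (\<Prod>j\<in>J. emeasure (Expo l) (F j))"
      using J F E.emeasure_space_1 by (subst emeasure_QQ_emb[OF l]) auto
    finally show ?thesis .
  qed
qed

lemma meas_QQ_into:
  assumes "\<And>i. (\<lambda>x. F x i) \<in> borel_measurable N"
  shows "F \<in> measurable N (QQ l)"
proof -
  have "(\<lambda>x i. F x i) \<in> measurable N (QQ l)"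
    unfolding QQ_def by (rule measurable_PiM_single') (use assms in \<open>auto simp: space_PiM\<close>)
  then show ?thesis by simp
qed

lemma meas_comp[measurable]: "(\<lambda>H. H \<circ> s) \<in> measurable (QQ l) (QQ l)"
proof -
  have "(\<lambda>H i. (H \<circ> s) i) \<in> measurable (QQ l) (QQ l)"
    unfolding QQ_def
    by (rule measurable_PiM_single') (auto simp: space_PiM intro!: measurable_component_singleton)
  then show ?thesis by (simp add: comp_def)
qed

lemma QQ_reindex:
  assumes l: "0 < l" and s: "inj s"
  shows "distr (QQ l) (QQ l) (\<lambda>H. H \<circ> s) = QQ l"
proof (rule QQ_eqI[OF l])
  show "sets (distr (QQ l) (QQ l) (\<lambda>H. H \<circ> s)) = sets (QQ l)" by simp
next
  fix J :: "(nat\<times>nat) set" and F :: "nat\<times>nat \<Rightarrow> real set" assume J: "finite J" and F: "\<And>j. j \<in> J \<Longrightarrow> F j \<in> sets borel"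
  have mJ: "{H. \<forall>j\<in>J. H j \<in> F j} \<in> sets (QQ l)" if "finite J" "\<And>j. j \<in> J \<Longrightarrow> F j \<in> sets borel" for J F
    using sets_QQ_cyl that by blast
  have "(\<lambda>H. H \<circ> s) -` {H. \<forall>j\<in>J. H j \<in> F j} \<inter> space (QQ l)
      = {H. \<forall>j\<in>s ` J. H j \<in> F (inv s j)}"
    using s by auto
  then have "emeasure (distr (QQ l) (QQ l) (\<lambda>H. H \<circ> s)) {H. \<forall>j\<in>J. H j \<in> F j}
      = emeasure (QQ l) {H. \<forall>j\<in>s ` J. H j \<in> F (inv s j)}"
    using mJ[OF J F] by (subst emeasure_distr) auto
  also have "\<dots> = (\<Prod>j\<in>s ` J. emeasure (Expo l) (F (inv s j)))"
    using J F s by (subst emeasure_QQ_emb[OF l]) auto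
  also have "\<dots> = (\<Prod>j\<in>J. emeasure (Expo l) (F j))"
    using s by (subst prod.reindex) (auto simp: inj_on_def)
  finally show "emeasure (distr (QQ l) (QQ l) (\<lambda>H. H \<circ> s)) {H. \<forall>j\<in>J. H j \<in> F j} = (\<Prod>j\<in>J. emeasure (Expo l) (F j))" .
qed


lemma Expo_memoryless:
  assumes l: "0 < l" and t: "0 \<le> t" and f: "f \<in> borel_measurable borel"
  shows "(\<integral>\<^sup>+y. indicator {t<..} y * f (y - t) \<partial>Expo l) = ennreal (exp (- l * t)) * (\<integral>\<^sup>+y. f y \<partial>Expo l)"
proof -
  have "(\<integral>\<^sup>+y. indicator {t<..} y * f (y - t) \<partial>Expo l)
      = (\<integral>\<^sup>+y. ennreal (exponential_density l y) * (indicator {t<..} y * f (y - t)) \<partial>lborel)"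
    unfolding Expo_def using f by (subst nn_integral_density) auto
  also have "\<dots> = (\<integral>\<^sup>+z. ennreal (exponential_density l (t + z)) * (indicator {t<..} (t + z) * f (t + z - t)) \<partial>lborel)"
    using f by (subst lborel_distr_plus[symmetric, of t]) (subst nn_integral_distr, auto)
  also have "\<dots> = (\<integral>\<^sup>+z. ennreal (exp (- l * t)) * (ennreal (exponential_density l z) * f z) \<partial>lborel)"
  proof (rule nn_integral_cong_AE)
    show "AE z in lborel. ennreal (exponential_density l (t + z)) * (indicator {t<..} (t + z) * f (t + z - t))
         = ennreal (exp (- l * t)) * (ennreal (exponential_density l z) * f z)"
      using AE_lborel_singleton[of 0]
    proof eventually_elim
      case (elim z)
      show ?case
      proof (cases "z < 0")
        case True then show ?thesis by (simp add: exponential_density_def indicator_def)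
      next
        case False
        with elim have "0 < z" by simp
        then have "exponential_density l (t + z) = exp (- l * t) * exponential_density l z"
          using t by (simp add: exponential_density_def algebra_simps exp_add[symmetric])
        then show ?thesis using \<open>0 < z\<close>
          by (simp add: indicator_def ennreal_mult' mult.assoc)
      qed
    qed
  qed
  also have "\<dots> = ennreal (exp (- l * t)) * (\<integral>\<^sup>+z. ennreal (exponential_density l z) * f z \<partial>lborel)"
    using f by (subst nn_integral_cmult) auto
  also have "\<dots> = ennreal (exp (- l * t)) * (\<integral>\<^sup>+y. f y \<partial>Expo l)"
    unfolding Expo_def using f by (subst nn_integral_density) auto
  finally show ?thesis .
qed

lemma QQ_memoryless:
  assumes l: "0 < l" and t: "0 \<le> t" and g: "g \<in> borel_measurable (QQ l)"
  shows "(\<integral>\<^sup>+H. indicator {t<..} (H p) * g (H(p := H p - t)) \<partial>QQ l) = ennreal (exp (- l * t)) * (\<integral>\<^sup>+H. g H \<partial>QQ l)"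
proof -
  interpret E: prob_space "Expo l" using prob_Expo[OF l] .
  interpret Q: prob_space "QQ l" using prob_QQ[OF l] .
  interpret pair_sigma_finite "Expo l" "QQ l" by unfold_locales
  have gm: "(\<lambda>(y, H). g (H(p := y))) \<in> borel_measurable (Expo l \<Otimes>\<^sub>M QQ l)"
    using measurable_comp[OF meas_upd g] by (simp add: comp_def split_beta)
  have gm2: "(\<lambda>(y, H). indicator {t<..} y * g (H(p := y - t))) \<in> borel_measurable (Expo l \<Otimes>\<^sub>M QQ l)"
  proof -
    have "(\<lambda>(y, H). (y - t, H)) \<in> measurable (Expo l \<Otimes>\<^sub>M QQ l) (Expo l \<Otimes>\<^sub>M QQ l)" by measurable
    from measurable_comp[OF this gm] have "(\<lambda>(y, H). g (H(p := y - t))) \<in> borel_measurable (Expo l \<Otimes>\<^sub>M QQ l)"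
      by (simp add: comp_def split_beta)
    then show ?thesis by measurable
  qed
  have "(\<integral>\<^sup>+H. indicator {t<..} (H p) * g (H(p := H p - t)) \<partial>QQ l)
      = (\<integral>\<^sup>+H. indicator {t<..} (H p) * g (H(p := H p - t)) \<partial>distr (Expo l \<Otimes>\<^sub>M QQ l) (QQ l) (\<lambda>(y,H). H(p:=y)))"
    by (simp add: QQ_resample[OF l])
  also have "\<dots> = (\<integral>\<^sup>+x. (\<lambda>(y, H). indicator {t<..} y * g (H(p := y - t))) x \<partial>(Expo l \<Otimes>\<^sub>M QQ l))"
  proof (subst nn_integral_distr)
    have "(\<lambda>H. H(p := H p - t)) \<in> measurable (QQ l) (QQ l)"
      by (rule meas_QQ_into) auto
    from measurable_comp[OF this g] show "(\<lambda>H. indicator {t<..} (H p) * g (H(p := H p - t))) \<in> borel_measurable (distr (Expo l \<Otimes>\<^sub>M QQ l) (QQ l) (\<lambda>(y,H). H(p:=y)))"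
      by (simp add: comp_def)
  qed (auto simp: split_beta')
  also have "\<dots> = (\<integral>\<^sup>+H. \<integral>\<^sup>+y. indicator {t<..} y * g (H(p := y - t)) \<partial>Expo l \<partial>QQ l)"
    using gm2 by (subst nn_integral_snd[symmetric]) (auto simp: split_beta)
  also have "\<dots> = (\<integral>\<^sup>+H. ennreal (exp (- l * t)) * \<integral>\<^sup>+y. g (H(p := y)) \<partial>Expo l \<partial>QQ l)"
  proof (rule nn_integral_cong)
    fix H :: "nat\<times>nat \<Rightarrow> real"
    have "(\<lambda>y. g (H(p := y))) \<in> borel_measurable borel"
      using measurable_comp[OF _ g, of "\<lambda>y. H(p:=y)" borel] by (simp add: comp_def QQ_def measurable_PiM_single' space_PiM)
    then show "(\<integral>\<^sup>+y. indicator {t<..} y * g (H(p := y - t)) \<partial>Expo l) = ennreal (exp (- l * t)) * \<integral>\<^sup>+y. g (H(p := y)) \<partial>Expo l"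
      using Expo_memoryless[OF l t, of "\<lambda>y. g (H(p := y))"] by simp
  qed
  also have "\<dots> = ennreal (exp (- l * t)) * (\<integral>\<^sup>+H. \<integral>\<^sup>+y. g (H(p := y)) \<partial>Expo l \<partial>QQ l)"
  proof (rule nn_integral_cmult)
    have "(\<lambda>x. (\<lambda>(y, H). g (H(p := y))) ((\<lambda>(x,y). (y,x)) x)) \<in> borel_measurable (QQ l \<Otimes>\<^sub>M Expo l)"
      using measurable_comp[OF measurable_pair_swap' gm] by (simp add: comp_def)
    then have "case_prod (\<lambda>H y. g (H(p := y))) \<in> borel_measurable (QQ l \<Otimes>\<^sub>M Expo l)"
      by (simp add: split_beta')
    from E.borel_measurable_nn_integral[OF this] show "(\<lambda>H. \<integral>\<^sup>+y. g (H(p := y)) \<partial>Expo l) \<in> borel_measurable (QQ l)" .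
  qed
  also have "(\<integral>\<^sup>+H. \<integral>\<^sup>+y. g (H(p := y)) \<partial>Expo l \<partial>QQ l) = (\<integral>\<^sup>+x. (\<lambda>(y, H). g (H(p := y))) x \<partial>(Expo l \<Otimes>\<^sub>M QQ l))"
    using gm by (subst nn_integral_snd[symmetric]) (auto simp: split_beta)
  also have "\<dots> = (\<integral>\<^sup>+H. g H \<partial>distr (Expo l \<Otimes>\<^sub>M QQ l) (QQ l) (\<lambda>(y,H). H(p:=y)))"
    using g by (subst nn_integral_distr) (auto simp: split_beta')
  also have "\<dots> = (\<integral>\<^sup>+H. g H \<partial>QQ l)"
    by (simp add: QQ_resample[OF l])
  finally show ?thesis .
qed


definition shiftF :: "(nat\<times>nat) set \<Rightarrow> real \<Rightarrow> (nat\<times>nat \<Rightarrow> real) \<Rightarrow> (nat\<times>nat \<Rightarrow> real)" where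
  "shiftF F t H = (\<lambda>q. if q \<in> F then H q - t else H q)"

lemma meas_shiftF[measurable]: "(\<lambda>H. shiftF F t H) \<in> measurable (QQ l) (QQ l)"
  unfolding shiftF_def by (rule meas_QQ_into) auto

lemma QQ_memoryless_set:
  assumes l: "0 < l" and t: "0 \<le> t" and F: "finite F"
  shows "g \<in> borel_measurable (QQ l) \<Longrightarrow>
    (\<integral>\<^sup>+H. (\<Prod>p\<in>F. indicator {t<..} (H p)) * g (shiftF F t H) \<partial>QQ l)
      = ennreal (exp (- l * t)) ^ card F * (\<integral>\<^sup>+H. g H \<partial>QQ l)"
  using F
proof (induction F arbitrary: g rule: finite_induct)
  case empty
  then show ?case by (simp add: shiftF_def)
next
  case (insert p F)
  define g' where "g' = (\<lambda>K. (\<Prod>q\<in>F. indicator {t<..} (K q)) * g (shiftF F t K))"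
  have g'm: "g' \<in> borel_measurable (QQ l)"
    unfolding g'_def using insert.prems by measurable
  have eq: "(\<Prod>q\<in>insert p F. indicator {t<..} (H q)) * g (shiftF (insert p F) t H)
      = indicator {t<..} (H p) * g' (H(p := H p - t))" for H :: "nat\<times>nat \<Rightarrow> real"
  proof -
    have "(\<Prod>q\<in>F. indicator {t<..} ((H(p := H p - t)) q)) = (\<Prod>q\<in>F. indicator {t<..} (H q) :: ennreal)"
      using insert.hyps by (intro prod.cong) auto
    moreover have "shiftF F t (H(p := H p - t)) = shiftF (insert p F) t H"
      using insert.hyps by (auto simp: shiftF_def fun_eq_iff)
    ultimately show ?thesis
      using insert.hyps by (simp add: g'_def mult.assoc)
  qed
  have "(\<integral>\<^sup>+H. (\<Prod>q\<in>insert p F. indicator {t<..} (H q)) * g (shiftF (insert p F) t H) \<partial>QQ l)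
      = (\<integral>\<^sup>+H. indicator {t<..} (H p) * g' (H(p := H p - t)) \<partial>QQ l)"
    by (simp add: eq)
  also have "\<dots> = ennreal (exp (- l * t)) * (\<integral>\<^sup>+H. g' H \<partial>QQ l)"
    by (rule QQ_memoryless[OF l t g'm])
  also have "(\<integral>\<^sup>+H. g' H \<partial>QQ l) = ennreal (exp (- l * t)) ^ card F * (\<integral>\<^sup>+H. g H \<partial>QQ l)"
    unfolding g'_def by (rule insert.IH[OF insert.prems])
  finally show ?case using insert.hyps by (simp add: mult.assoc)
qed

definition theta :: "nat \<Rightarrow> nat \<Rightarrow> (nat\<times>nat \<Rightarrow> real) \<Rightarrow> (nat\<times>nat \<Rightarrow> real)" where
  "theta n a G = (\<lambda>(i,j). if i = a then G (a, Suc j) else if i \<in> {1..n} \<and> j = 0 then G (i,0) - G (a,0) else G (i,j))"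

definition sidx :: "nat \<Rightarrow> nat\<times>nat \<Rightarrow> nat\<times>nat" where
  "sidx a = (\<lambda>(i,j). if i = a then (a, Suc j) else (i,j))"

lemma inj_sidx: "inj (sidx a)"
  by (auto simp: inj_def sidx_def split: if_splits)

lemma theta_eq: "theta n a G = shiftF ((\<lambda>i. (i,0)) ` ({1..n} - {a})) (G (a,0)) (G \<circ> sidx a)"
  by (auto simp: theta_def shiftF_def sidx_def fun_eq_iff)

lemma meas_theta[measurable]: "(\<lambda>G. theta n a G) \<in> measurable (QQ l) (QQ l)"
  unfolding theta_def by (rule meas_QQ_into) (auto simp: split_beta')

lemma core:
  assumes l: "0 < l" and a: "a \<in> {1..n}"
    and f: "f \<in> borel_measurable (borel \<Otimes>\<^sub>M QQ l)"
  shows "(\<integral>\<^sup>+G. indicator {0<..x} (G (a,0)) * (\<Prod>i\<in>{1..n}-{a}. indicator {G (a,0)<..} (G (i,0)))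
            * f (G (a,0), theta n a G) \<partial>QQ l)
       = (\<integral>\<^sup>+\<tau>. indicator {0<..x} \<tau> * ennreal (exp (- l * \<tau>)) ^ (n - 1) * (\<integral>\<^sup>+H. f (\<tau>, H) \<partial>QQ l) \<partial>Expo l)"
proof -
  interpret E: prob_space "Expo l" using prob_Expo[OF l] .
  interpret Q: prob_space "QQ l" using prob_QQ[OF l] .
  interpret pair_sigma_finite "Expo l" "QQ l" by unfold_locales
  define F0 where "F0 = (\<lambda>i. (i,0::nat)) ` ({1..n} - {a})"
  have F0: "finite F0" "card F0 = n - 1"
    using a by (auto simp: F0_def card_image inj_on_def)
  have prodF0: "(\<Prod>i\<in>{1..n}-{a}. h ((i,0::nat))) = (\<Prod>p\<in>F0. h p)" for h :: "nat\<times>nat \<Rightarrow> ennreal"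
    unfolding F0_def by (subst prod.reindex) (auto simp: inj_on_def)
  define Phi where "Phi = (\<lambda>G. indicator {0<..x} (G (a,0)) * (\<Prod>i\<in>{1..n}-{a}. indicator {G (a,0)<..} (G (i,0)))
            * f (G (a,0), theta n a G) :: ennreal)"
  have fm2: "(\<lambda>H. f (t, H)) \<in> borel_measurable (QQ l)" for t
    using f by measurable
  have Phim: "Phi \<in> borel_measurable (QQ l)"
  proof -
    have 1: "(\<lambda>G. (G (a,0), theta n a G)) \<in> measurable (QQ l) (borel \<Otimes>\<^sub>M QQ l)"
      by (intro measurable_Pair) auto
    have 2: "(\<lambda>G. f (G (a,0), theta n a G)) \<in> borel_measurable (QQ l)"
      using measurable_comp[OF 1 f] by (simp add: comp_def)
    have 3: "(\<lambda>G. \<Prod>i\<in>{1..n}-{a}. indicator {G (a,0)<..} (G (i,0)) :: ennreal) \<in> borel_measurable (QQ l)"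
      unfolding indicator_def greaterThan_iff by measurable
    show ?thesis unfolding Phi_def using 2 3 by measurable
  qed
  have upd: "Phi (H((a,0) := y)) = indicator {0<..x} y * ((\<Prod>p\<in>F0. indicator {y<..} ((H \<circ> sidx a) p)) * f (y, shiftF F0 y (H \<circ> sidx a)))"
    for H y
  proof -
    have "(H((a,0) := y)) \<circ> sidx a = H \<circ> sidx a"
      by (auto simp: sidx_def fun_eq_iff)
    moreover have "(\<Prod>i\<in>{1..n}-{a}. indicator {y<..} ((H((a,0) := y)) (i,0)) :: ennreal)
        = (\<Prod>p\<in>F0. indicator {y<..} ((H \<circ> sidx a) p))"
      by (subst prodF0[symmetric]) (auto simp: sidx_def intro!: prod.cong)
    ultimately show ?thesis
      unfolding Phi_def theta_eq[of n a "H((a,0) := y)"] F0_def[symmetric] by (simp add: mult.assoc)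
  qed
  have "(\<integral>\<^sup>+G. Phi G \<partial>QQ l) = (\<integral>\<^sup>+G. Phi G \<partial>distr (Expo l \<Otimes>\<^sub>M QQ l) (QQ l) (\<lambda>(y,H). H((a,0):=y)))"
    by (simp add: QQ_resample[OF l])
  also have "\<dots> = (\<integral>\<^sup>+z. Phi ((snd z)((a,0) := fst z)) \<partial>(Expo l \<Otimes>\<^sub>M QQ l))"
    using Phim by (subst nn_integral_distr) (auto simp: split_beta')
  also have "\<dots> = (\<integral>\<^sup>+y. \<integral>\<^sup>+H. Phi (H((a,0) := y)) \<partial>QQ l \<partial>Expo l)"
  proof (subst Q.nn_integral_fst[symmetric])
    show "(\<lambda>z. Phi ((snd z)((a, 0) := fst z))) \<in> borel_measurable (Expo l \<Otimes>\<^sub>M QQ l)"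
      using measurable_comp[OF meas_upd Phim] by (simp add: comp_def split_beta')
  qed simp
  also have "\<dots> = (\<integral>\<^sup>+y. indicator {0<..x} y * ennreal (exp (- l * y)) ^ (n - 1) * (\<integral>\<^sup>+H. f (y, H) \<partial>QQ l) \<partial>Expo l)"
  proof (rule nn_integral_cong)
    fix y :: real
    show "(\<integral>\<^sup>+H. Phi (H((a,0) := y)) \<partial>QQ l) = indicator {0<..x} y * ennreal (exp (- l * y)) ^ (n - 1) * (\<integral>\<^sup>+H. f (y, H) \<partial>QQ l)"
    proof (cases "y \<in> {0<..x}")
      case False
      then show ?thesis by (simp add: upd)
    next
      case True
      define phi where "phi = (\<lambda>K. (\<Prod>p\<in>F0. indicator {y<..} (K p)) * f (y, shiftF F0 y K) :: ennreal)"
      have phim: "phi \<in> borel_measurable (QQ l)" unfolding phi_def using f by measurable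
      have "(\<integral>\<^sup>+H. Phi (H((a,0) := y)) \<partial>QQ l) = (\<integral>\<^sup>+H. phi (H \<circ> sidx a) \<partial>QQ l)"
        using True by (simp add: upd phi_def)
      also have "\<dots> = (\<integral>\<^sup>+H. phi H \<partial>distr (QQ l) (QQ l) (\<lambda>H. H \<circ> sidx a))"
        using phim by (subst nn_integral_distr) auto
      also have "\<dots> = (\<integral>\<^sup>+H. phi H \<partial>QQ l)"
        by (simp add: QQ_reindex[OF l inj_sidx])
      also have "\<dots> = ennreal (exp (- l * y)) ^ card F0 * (\<integral>\<^sup>+H. f (y, H) \<partial>QQ l)"
        unfolding phi_def using True by (intro QQ_memoryless_set[OF l _ F0(1)] fm2) auto
      finally show ?thesis using True F0 by simp
    qed
  qed
  finally show ?thesis unfolding Phi_def .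
qed


fun RR :: "nat \<Rightarrow> nat list \<Rightarrow> real \<Rightarrow> (nat\<times>nat \<Rightarrow> real) \<Rightarrow> bool" where
  "RR n [] x G = (\<forall>i\<in>{1..n}. x < G (i,0))"
| "RR n (a#u) x G = (a \<in> {1..n} \<and> 0 < G (a,0) \<and> G (a,0) \<le> x \<and> (\<forall>i\<in>{1..n}-{a}. G (a,0) < G (i,0))
      \<and> RR n u (x - G (a,0)) (theta n a G))"

lemma RR_meas: "Measurable.pred (borel \<Otimes>\<^sub>M QQ l) (\<lambda>z. RR n u (fst z) (snd z))"
proof (induction u)
  case Nil
  then show ?case by simp measurable
next
  case (Cons a u)
  have m: "(\<lambda>z. (fst z - snd z (a,0), theta n a (snd z))) \<in> measurable (borel \<Otimes>\<^sub>M QQ l) (borel \<Otimes>\<^sub>M QQ l)"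
  proof (intro measurable_Pair)
    show "(\<lambda>z. theta n a (snd z)) \<in> measurable (borel \<Otimes>\<^sub>M QQ l) (QQ l)"
      using measurable_comp[OF measurable_snd meas_theta] by (simp add: comp_def)
  qed measurable
  have "Measurable.pred (borel \<Otimes>\<^sub>M QQ l) (\<lambda>z. RR n u (fst z - snd z (a,0)) (theta n a (snd z)))"
    using measurable_comp[OF m Cons.IH] by (simp add: comp_def)
  then show ?case by simp measurable
qed

lemma RR_meas2: "Measurable.pred (QQ l) (\<lambda>G. RR n u x G)"
proof -
  have "(\<lambda>G. (x, G)) \<in> measurable (QQ l) (borel \<Otimes>\<^sub>M QQ l)" by measurable
  from measurable_comp[OF this RR_meas] show ?thesis by (simp add: comp_def)
qed

lemma RR_sets: "{G. RR n u x G} \<in> sets (QQ l)"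
proof -
  have "{G \<in> space (QQ l). RR n u x G} \<in> sets (QQ l)" using RR_meas2 by measurable
  then show ?thesis by simp
qed

definition qf :: "nat \<Rightarrow> real \<Rightarrow> nat \<Rightarrow> real \<Rightarrow> real" where
  "qf n l m x = exp (- (n * l * x)) * (l * x) ^ m / fact m"

lemma int_poly:
  assumes x: "0 \<le> x" and C: "0 \<le> C"
  shows "(\<integral>\<^sup>+\<tau>. indicator {0<..x} \<tau> * ennreal (C * (x - \<tau>) ^ m) \<partial>lborel) = ennreal (C * x ^ Suc m / Suc m)"
proof -
  have d: "((\<lambda>\<tau>. - C * (x - \<tau>) ^ Suc m / Suc m) has_vector_derivative (C * (x - \<tau>) ^ m)) (at \<tau> within {0..x})" for \<tau>
  proof -
    have "((\<lambda>\<tau>. (x - \<tau>) ^ Suc m) has_real_derivative (real (Suc m) * (x - \<tau>) ^ m * (0 - 1))) (at \<tau> within {0..x})"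
    proof -
      have 1: "((\<lambda>y. y ^ Suc m) has_real_derivative real (Suc m) * (x - \<tau>) ^ m) (at (x - \<tau>))"
        using DERIV_pow[of "Suc m" "x - \<tau>" UNIV] by simp
      have 2: "((\<lambda>\<tau>. x - \<tau>) has_real_derivative (0 - 1)) (at \<tau> within {0..x})"
        by (auto intro!: derivative_eq_intros)
      from DERIV_chain2[OF 1 2] show ?thesis by simp
    qed
    then have "((\<lambda>\<tau>. (- C / Suc m) * (x - \<tau>) ^ Suc m) has_real_derivative ((- C / Suc m) * (real (Suc m) * (x - \<tau>) ^ m * (0 - 1)))) (at \<tau> within {0..x})"
      by (rule DERIV_cmult)
    moreover have "(- C / Suc m) * (real (Suc m) * (x - \<tau>) ^ m * (0 - 1)) = C * (x - \<tau>) ^ m"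
      by (simp add: field_simps)
    moreover have "(\<lambda>\<tau>. (- C / Suc m) * (x - \<tau>) ^ Suc m) = (\<lambda>\<tau>. - C * (x - \<tau>) ^ Suc m / Suc m)"
      by (simp add: fun_eq_iff field_simps)
    ultimately show ?thesis
      unfolding has_real_derivative_iff_has_vector_derivative[symmetric] by simp
  qed
  have "((\<lambda>\<tau>. C * (x - \<tau>) ^ m) has_integral ((- C * (x - x) ^ Suc m / Suc m) - (- C * (x - 0) ^ Suc m / Suc m))) {0..x}"
    by (rule fundamental_theorem_of_calculus[OF x d])
  then have hi: "((\<lambda>\<tau>. C * (x - \<tau>) ^ m) has_integral (C * x ^ Suc m / Suc m)) {0..x}"
    by simp
  have "(\<integral>\<^sup>+\<tau>. ennreal (C * (x - \<tau>) ^ m) * indicator {0..x} \<tau> \<partial>lborel) = ennreal (C * x ^ Suc m / Suc m)"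
    by (rule nn_integral_has_integral_lebesgue'[OF _ hi]) (use C in auto)
  moreover have "(\<integral>\<^sup>+\<tau>. indicator {0<..x} \<tau> * ennreal (C * (x - \<tau>) ^ m) \<partial>lborel)
      = (\<integral>\<^sup>+\<tau>. ennreal (C * (x - \<tau>) ^ m) * indicator {0..x} \<tau> \<partial>lborel)"
    by (rule nn_integral_cong_AE) (use AE_lborel_singleton[of 0] in \<open>eventually_elim, auto simp: indicator_def\<close>)
  ultimately show ?thesis by simp
qed

lemma Expo_gt:
  assumes l: "0 < l" and t: "0 \<le> t"
  shows "emeasure (Expo l) {t<..} = ennreal (exp (- l * t))"
proof -
  interpret E: prob_space "Expo l" using prob_Expo[OF l] .
  have "emeasure (Expo l) {t<..} = (\<integral>\<^sup>+y. indicator {t<..} y * (\<lambda>_. 1) (y - t) \<partial>Expo l)"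
    by (simp add: nn_integral_indicator)
  also have "\<dots> = ennreal (exp (- l * t)) * (\<integral>\<^sup>+y. 1 \<partial>Expo l)"
    by (rule Expo_memoryless[OF l t]) simp
  finally show ?thesis using E.emeasure_space_1 by simp
qed

lemma ennreal_triple: "0 \<le> a \<Longrightarrow> 0 \<le> b \<Longrightarrow> 0 \<le> c \<Longrightarrow> ennreal a * (ennreal b ^ k * ennreal c) = ennreal (a * (b ^ k * c))"
  by (simp add: ennreal_power ennreal_mult')

lemma RR_prob:
  assumes l: "0 < l"
  shows "0 \<le> x \<Longrightarrow> set u \<subseteq> {1..n} \<Longrightarrow> emeasure (QQ l) {G. RR n u x G} = ennreal (qf n l (length u) x)"
proof (induction u arbitrary: x)
  case Nil
  have "emeasure (QQ l) {G. RR n [] x G} = emeasure (QQ l) {G. \<forall>j\<in>(\<lambda>i. (i,0::nat)) ` {1..n}. G j \<in> {x<..}}"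
    by (auto intro!: arg_cong[where f="emeasure (QQ l)"])
  also have "\<dots> = (\<Prod>j\<in>(\<lambda>i. (i,0::nat)) ` {1..n}. emeasure (Expo l) {x<..})"
    by (rule emeasure_QQ_emb[OF l]) auto
  also have "\<dots> = ennreal (exp (- l * x)) ^ n"
    using Nil by (simp add: Expo_gt[OF l] card_image inj_on_def)
  also have "\<dots> = ennreal (qf n l 0 x)"
    by (simp add: qf_def ennreal_power exp_of_nat_mult[symmetric] algebra_simps)
  finally show ?case by simp
next
  case (Cons a u)
  interpret E: prob_space "Expo l" using prob_Expo[OF l] .
  interpret Q: prob_space "QQ l" using prob_QQ[OF l] .
  have a: "a \<in> {1..n}" and u: "set u \<subseteq> {1..n}" using Cons.prems by auto
  then have n: "1 \<le> n" by auto
  define f where "f = (\<lambda>z. indicator {z. RR n u (x - fst z) (snd z)} z :: ennreal)"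
  have fm: "f \<in> borel_measurable (borel \<Otimes>\<^sub>M QQ l)"
  proof -
    have m: "(\<lambda>z. (x - fst z, snd z)) \<in> measurable (borel \<Otimes>\<^sub>M QQ l) (borel \<Otimes>\<^sub>M QQ l)" by measurable
    have "Measurable.pred (borel \<Otimes>\<^sub>M QQ l) (\<lambda>z. RR n u (x - fst z) (snd z))"
      using measurable_comp[OF m RR_meas] by (simp add: comp_def)
    then show ?thesis unfolding f_def by measurable
  qed
  have ind: "indicator {G. RR n (a#u) x G} G = indicator {0<..x} (G (a,0)) * (\<Prod>i\<in>{1..n}-{a}. indicator {G (a,0)<..} (G (i,0)))
            * f (G (a,0), theta n a G)" for G
    using a by (auto simp: indicator_def f_def prod_zero_iff)
  have "emeasure (QQ l) {G. RR n (a#u) x G} = (\<integral>\<^sup>+G. indicator {G. RR n (a#u) x G} G \<partial>QQ l)"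
    by (rule nn_integral_indicator[symmetric, OF RR_sets])
  also have "\<dots> = (\<integral>\<^sup>+\<tau>. indicator {0<..x} \<tau> * ennreal (exp (- l * \<tau>)) ^ (n - 1) * (\<integral>\<^sup>+H. f (\<tau>, H) \<partial>QQ l) \<partial>Expo l)"
    unfolding ind by (rule core[OF l a fm])
  also have "\<dots> = (\<integral>\<^sup>+\<tau>. indicator {0<..x} \<tau> * ennreal (exp (- l * \<tau>)) ^ (n - 1) * ennreal (qf n l (length u) (x - \<tau>)) \<partial>Expo l)"
  proof (rule nn_integral_cong)
    fix \<tau> :: real
    show "indicator {0<..x} \<tau> * ennreal (exp (- l * \<tau>)) ^ (n - 1) * (\<integral>\<^sup>+H. f (\<tau>, H) \<partial>QQ l) =
          indicator {0<..x} \<tau> * ennreal (exp (- l * \<tau>)) ^ (n - 1) * ennreal (qf n l (length u) (x - \<tau>))"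
    proof (cases "\<tau> \<in> {0<..x}")
      case True
      have "(\<integral>\<^sup>+H. f (\<tau>, H) \<partial>QQ l) = (\<integral>\<^sup>+H. indicator {G. RR n u (x - \<tau>) G} H \<partial>QQ l)"
        unfolding f_def by (intro nn_integral_cong) (simp add: indicator_def)
      also have "\<dots> = emeasure (QQ l) {G. RR n u (x - \<tau>) G}"
        by (rule nn_integral_indicator[OF RR_sets])
      also have "\<dots> = ennreal (qf n l (length u) (x - \<tau>))"
        using True u by (intro Cons.IH) auto
      finally show ?thesis by simp
    qed simp
  qed
  also have "\<dots> = (\<integral>\<^sup>+\<tau>. ennreal (exponential_density l \<tau>) * (indicator {0<..x} \<tau> * ennreal (exp (- l * \<tau>)) ^ (n - 1) * ennreal (qf n l (length u) (x - \<tau>))) \<partial>lborel)"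
    unfolding Expo_def by (subst nn_integral_density) (auto simp: qf_def)
  also have "\<dots> = (\<integral>\<^sup>+\<tau>. indicator {0<..x} \<tau> * ennreal ((exp (- (n * l * x)) * l ^ Suc (length u) / fact (length u)) * (x - \<tau>) ^ length u) \<partial>lborel)"
  proof (rule nn_integral_cong)
    fix \<tau> :: real
    show "ennreal (exponential_density l \<tau>) * (indicator {0<..x} \<tau> * ennreal (exp (- l * \<tau>)) ^ (n - 1) * ennreal (qf n l (length u) (x - \<tau>)))
        = indicator {0<..x} \<tau> * ennreal ((exp (- (n * l * x)) * l ^ Suc (length u) / fact (length u)) * (x - \<tau>) ^ length u)"
    proof (cases "\<tau> \<in> {0<..x}")
      case True
      have e1: "exp (- l * \<tau>) ^ (n - 1) * exp (- \<tau> * l) = exp (- (n * l * \<tau>))"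
        using n by (simp add: exp_of_nat_mult[symmetric] exp_add[symmetric] algebra_simps of_nat_diff)
      have e2: "exp (- (n * l * \<tau>)) * exp (- (n * l * (x - \<tau>))) = exp (- (n * l * x))"
        by (simp add: exp_add[symmetric] algebra_simps)
      have "exponential_density l \<tau> * (exp (- l * \<tau>) ^ (n - 1) * qf n l (length u) (x - \<tau>))
          = (exp (- (n * l * x)) * l ^ Suc (length u) / fact (length u)) * (x - \<tau>) ^ length u"
      proof -
        have "exponential_density l \<tau> * (exp (- l * \<tau>) ^ (n - 1) * qf n l (length u) (x - \<tau>))
            = l * (exp (- l * \<tau>) ^ (n - 1) * exp (- \<tau> * l)) * qf n l (length u) (x - \<tau>)"
          using True by (simp add: exponential_density_def)
        also have "\<dots> = l * (exp (- (n * l * \<tau>)) * exp (- (n * l * (x - \<tau>)))) * (l * (x - \<tau>)) ^ length u / fact (length u)"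
          unfolding e1 qf_def by simp
        also have "\<dots> = (exp (- (n * l * x)) * l ^ Suc (length u) / fact (length u)) * (x - \<tau>) ^ length u"
          unfolding e2 by (simp add: power_mult_distrib)
        finally show ?thesis .
      qed
      moreover have "0 \<le> exp (- l * \<tau>) ^ (n - 1)" "0 \<le> qf n l (length u) (x - \<tau>)" "0 \<le> exponential_density l \<tau>"
        using True l by (auto simp: qf_def exponential_density_def)
      moreover have "ennreal (exponential_density l \<tau>) * (ennreal (exp (- l * \<tau>)) ^ (n - 1) * ennreal (qf n l (length u) (x - \<tau>)))
          = ennreal (exponential_density l \<tau> * (exp (- l * \<tau>) ^ (n - 1) * qf n l (length u) (x - \<tau>)))"
        using True l by (intro ennreal_triple) (auto simp: qf_def exponential_density_def)
      ultimately show ?thesis using True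
        by (simp add: mult.assoc)
    qed simp
  qed
  also have "\<dots> = ennreal ((exp (- (n * l * x)) * l ^ Suc (length u) / fact (length u)) * x ^ Suc (length u) / Suc (length u))"
    using Cons.prems l by (intro int_poly) auto
  also have "(exp (- (n * l * x)) * l ^ Suc (length u) / fact (length u)) * x ^ Suc (length u) / Suc (length u)
       = qf n l (length (a#u)) x"
    by (simp add: qf_def power_mult_distrib field_simps)
  finally show ?case .
qed


fun pts :: "nat \<Rightarrow> nat list \<Rightarrow> (nat\<times>nat \<Rightarrow> real) \<Rightarrow> (real \<times> nat) list" where
  "pts n [] G = []"
| "pts n (a#u) G = (G (a,0), a) # map (\<lambda>(t,i). (t + G (a,0), i)) (pts n u (theta n a G))"

definition psum :: "(nat\<times>nat \<Rightarrow> real) \<Rightarrow> nat \<Rightarrow> nat \<Rightarrow> real" where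
  "psum G i m = (\<Sum>j\<le>m. G (i,j))"

lemma ppp_window_psum: "ppp_window G x n = {(t,i). 1 \<le> i \<and> i \<le> n \<and> 0 \<le> t \<and> t \<le> x \<and> (\<exists>m. t = psum G i m)}"
  by (simp add: ppp_window_def psum_def)

lemma psum_ge: "(\<forall>ij. 0 < G ij) \<Longrightarrow> G (i,0) \<le> psum G i m"
proof (induction m)
  case 0 then show ?case by (simp add: psum_def)
next
  case (Suc m)
  then have "0 < G (i, Suc m)" by auto
  moreover have "psum G i (Suc m) = psum G i m + G (i, Suc m)" by (simp add: psum_def)
  ultimately show ?case using Suc.IH[OF Suc.prems] by linarith
qed

lemma psum_theta_a: "psum (theta n a G) a m = psum G a (Suc m) - G (a,0)"
proof -
  have "(\<Sum>j\<le>Suc m. G (a,j)) = G (a,0) + (\<Sum>j\<le>m. G (a, Suc j))"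
    by (rule sum.atMost_Suc_shift)
  moreover have "(\<Sum>j\<le>m. theta n a G (a,j)) = (\<Sum>j\<le>m. G (a, Suc j))"
    by (simp add: theta_def)
  ultimately show ?thesis unfolding psum_def by simp
qed

lemma psum_theta_i: "i \<in> {1..n} \<Longrightarrow> i \<noteq> a \<Longrightarrow> psum (theta n a G) i m = psum G i m - G (a,0)"
proof (induction m)
  case 0 then show ?case by (simp add: psum_def theta_def)
next
  case (Suc m) then show ?case by (simp add: psum_def theta_def)
qed

lemma pos_theta:
  assumes "\<forall>ij. 0 < G ij" "\<forall>i\<in>{1..n}-{a}. G (a,0) < G (i,0)"
  shows "\<forall>ij. 0 < theta n a G ij"
  using assms by (auto simp: theta_def)

lemma window_step:
  assumes pos: "\<forall>ij. 0 < G ij" and a: "a \<in> {1..n}" and t0: "0 < G (a,0)" "G (a,0) \<le> x"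
    and lt: "\<forall>i\<in>{1..n}-{a}. G (a,0) < G (i,0)"
  shows "ppp_window G x n = insert (G (a,0), a) ((\<lambda>(t,i). (t + G (a,0), i)) ` ppp_window (theta n a G) (x - G (a,0)) n)"
proof -
  let ?\<tau> = "G (a,0)"
  have posT: "\<forall>ij. 0 < theta n a G ij" using pos_theta[OF pos lt] .
  have psT: "0 < psum (theta n a G) i m" for i m
    using psum_ge[OF posT, of i m] posT by (meson less_le_trans)
  show ?thesis
  proof (intro set_eqI iffI)
    fix p assume p: "p \<in> ppp_window G x n"
    obtain t i where pe: "p = (t,i)" by (cases p)
    with p obtain m where i: "1 \<le> i" "i \<le> n" and tx: "0 \<le> t" "t \<le> x" and tm: "t = psum G i m"
      by (auto simp: ppp_window_psum)
    show "p \<in> insert (G (a,0), a) ((\<lambda>(t,i). (t + G (a,0), i)) ` ppp_window (theta n a G) (x - G (a,0)) n)"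
    proof (cases "i = a")
      case True
      show ?thesis
      proof (cases m)
        case 0
        then show ?thesis using True pe tm by (simp add: psum_def)
      next
        case (Suc m')
        have "t - ?\<tau> = psum (theta n a G) a m'" using tm Suc True by (simp add: psum_theta_a)
        then have "(t - ?\<tau>, i) \<in> ppp_window (theta n a G) (x - ?\<tau>) n"
          using i tx psT[of a m'] True by (auto simp: ppp_window_psum)
        then show ?thesis using pe by (auto intro!: image_eqI[where x="(t - ?\<tau>, i)"])
      qed
    next
      case False
      have "t - ?\<tau> = psum (theta n a G) i m" using tm False i by (simp add: psum_theta_i)
      then have "(t - ?\<tau>, i) \<in> ppp_window (theta n a G) (x - ?\<tau>) n"
        using i tx psT[of i m] by (auto simp: ppp_window_psum)
      then show ?thesis using pe by (auto intro!: image_eqI[where x="(t - ?\<tau>, i)"])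
    qed
  next
    fix p assume p: "p \<in> insert (G (a,0), a) ((\<lambda>(t,i). (t + G (a,0), i)) ` ppp_window (theta n a G) (x - G (a,0)) n)"
    show "p \<in> ppp_window G x n"
    proof (cases "p = (?\<tau>, a)")
      case True
      then show ?thesis using a t0 by (auto simp: ppp_window_psum psum_def intro!: exI[of _ 0])
    next
      case False
      with p obtain t i m where pe: "p = (t + ?\<tau>, i)" and i: "1 \<le> i" "i \<le> n" and tx: "0 \<le> t" "t \<le> x - ?\<tau>"
        and tm: "t = psum (theta n a G) i m"
        by (auto simp: ppp_window_psum)
      show ?thesis
      proof (cases "i = a")
        case True
        then have "t + ?\<tau> = psum G i (Suc m)" using tm by (simp add: psum_theta_a)
        then show ?thesis using pe i tx t0 by (auto simp: ppp_window_psum)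
      next
        case False
        then have "t + ?\<tau> = psum G i m" using tm i by (simp add: psum_theta_i)
        then show ?thesis using pe i tx t0 by (auto simp: ppp_window_psum)
      qed
    qed
  qed
qed

lemma window_pts:
  "(\<forall>ij. 0 < G ij) \<Longrightarrow> RR n u x G \<Longrightarrow> ppp_window G x n = set (pts n u G)"
proof (induction u arbitrary: x G)
  case Nil
  have "False" if "(t,i) \<in> ppp_window G x n" for t i
  proof -
    from that obtain m where i: "1 \<le> i" "i \<le> n" and tx: "t \<le> x" and tm: "t = psum G i m"
      by (auto simp: ppp_window_psum)
    have "x < G (i,0)" using Nil i by auto
    moreover have "G (i,0) \<le> psum G i m" by (rule psum_ge[OF Nil(1)])
    ultimately show False using tx tm by simp
  qed
  then show ?case by auto
next
  case (Cons a u)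
  from Cons.prems have a: "a \<in> {1..n}" and t0: "0 < G (a,0)" "G (a,0) \<le> x"
    and lt: "\<forall>i\<in>{1..n}-{a}. G (a,0) < G (i,0)" and R: "RR n u (x - G (a,0)) (theta n a G)" by auto
  have IH: "ppp_window (theta n a G) (x - G (a,0)) n = set (pts n u (theta n a G))"
    by (rule Cons.IH[OF pos_theta[OF Cons.prems(1) lt] R])
  show ?case
    unfolding window_step[OF Cons.prems(1) a t0 lt] IH by (simp add: image_image)
qed

lemma pts_props:
  "(\<forall>ij. 0 < G ij) \<Longrightarrow> RR n u x G \<Longrightarrow>
     (\<forall>p\<in>set (pts n u G). 0 < fst p) \<and> sorted_wrt (\<lambda>p q. fst p < fst q) (pts n u G) \<and> map snd (pts n u G) = u"
proof (induction u arbitrary: x G)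
  case Nil
  then show ?case by simp
next
  case (Cons a u)
  from Cons.prems have t0: "0 < G (a,0)"
    and lt: "\<forall>i\<in>{1..n}-{a}. G (a,0) < G (i,0)" and R: "RR n u (x - G (a,0)) (theta n a G)" by auto
  note IH = Cons.IH[OF pos_theta[OF Cons.prems(1) lt] R]
  have m: "map (\<lambda>(t::real, y::nat). y) xs = map snd xs" for xs :: "(real\<times>nat) list"
    by (induction xs) auto
  show ?case using IH t0
    by (auto simp: sorted_wrt_map split_beta m intro: sorted_wrt_mono_rel[of _ "\<lambda>p q. fst p < fst q"])
qed

lemma sorted_wrt_fst_distinct: "sorted_wrt (\<lambda>p q. fst p < (fst q :: real)) xs \<Longrightarrow> distinct xs"
  by (induction xs) auto

lemma len_filter_snd: "length (filter (\<lambda>p. snd p = i) xs) = count (mset (map snd xs)) i"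
  by (induction xs) auto

lemma card_row:
  assumes "(\<forall>ij. 0 < G ij)" "RR n u x G"
  shows "card {p \<in> ppp_window G x n. snd p = i} = count (mset u) i"
proof -
  have P: "sorted_wrt (\<lambda>p q. fst p < fst q) (pts n u G)" "map snd (pts n u G) = u"
    using pts_props[OF assms] by auto
  have d: "distinct (pts n u G)"
    using P(1) by (rule sorted_wrt_fst_distinct)
  have "{p \<in> ppp_window G x n. snd p = i} = set (filter (\<lambda>p. snd p = i) (pts n u G))"
    using window_pts[OF assms] by auto
  also have "card \<dots> = length (filter (\<lambda>p. snd p = i) (pts n u G))"
    using d by (intro distinct_card) simp
  also have "\<dots> = count (mset (map snd (pts n u G))) i"
    by (rule len_filter_snd)
  also have "\<dots> = count (mset u) i" using P(2) by simp
  finally show ?thesis .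
qed


lemma RR_unique: "RR n u x G \<Longrightarrow> RR n v x G \<Longrightarrow> u = v"
proof (induction u arbitrary: v x G)
  case Nil
  then show ?case by (cases v) force+
next
  case (Cons a u)
  show ?case
  proof (cases v)
    case Nil
    then show ?thesis using Cons.prems by force
  next
    case (Cons b v')
    have "a = b"
    proof (rule ccontr)
      assume "a \<noteq> b"
      then have "G (a,0) < G (b,0)" "G (b,0) < G (a,0)"
        using Cons.prems \<open>v = b # v'\<close> by auto
      then show False by simp
    qed
    with Cons.prems Cons.IH \<open>v = b # v'\<close> show ?thesis by auto
  qed
qed

lemma exp_series_sum:
  fixes n :: nat and l x :: real
  shows "(\<lambda>m. real n ^ m * qf n l m x) sums 1"
proof -
  have "(\<lambda>m. (n * l * x) ^ m /\<^sub>R fact m) sums exp (n * l * x)" by (rule exp_converges)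
  then have "(\<lambda>m. exp (- (n * l * x)) * ((n * l * x) ^ m /\<^sub>R fact m)) sums (exp (- (n * l * x)) * exp (n * l * x))"
    by (rule sums_mult)
  moreover have "exp (- (n * l * x)) * exp (n * l * x) = 1" by (simp add: exp_minus field_simps)
  moreover have "exp (- (n * l * x)) * ((n * l * x) ^ m /\<^sub>R fact m) = real n ^ m * qf n l m x" for m
    by (simp add: qf_def power_mult_distrib field_simps)
  ultimately show ?thesis by simp
qed

lemma RR_cover:
  assumes l: "0 < l" and x: "0 \<le> x"
  shows "AE G in QQ l. \<exists>u. set u \<subseteq> {1..n} \<and> RR n u x G"
proof -
  interpret Q: prob_space "QQ l" using prob_QQ[OF l] .
  define W where "W = (\<lambda>m. {u. set u \<subseteq> {1..n} \<and> length u = m})"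
  define A where "A = (\<lambda>m. \<Union>u\<in>W m. {G. RR n u x G})"
  have Wf: "finite (W m)" "card (W m) = n ^ m" for m
    unfolding W_def by (auto intro: finite_lists_length_eq simp: card_lists_length_eq)
  have As: "A m \<in> sets (QQ l)" for m
    unfolding A_def using Wf by (intro sets.finite_UN RR_sets) auto
  have disjW: "disjoint_family_on (\<lambda>u. {G. RR n u x G}) (W m)" for m
    by (auto simp: disjoint_family_on_def dest: RR_unique)
  have eA: "emeasure (QQ l) (A m) = ennreal (real n ^ m * qf n l m x)" for m
  proof -
    have "emeasure (QQ l) (A m) = (\<Sum>u\<in>W m. emeasure (QQ l) {G. RR n u x G})"
      unfolding A_def using Wf disjW by (intro sum_emeasure[symmetric]) (auto intro: RR_sets)
    also have "\<dots> = (\<Sum>u\<in>W m. ennreal (qf n l m x))"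
      using x RR_prob[OF l x] by (intro sum.cong refl) (auto simp: W_def)
    also have "\<dots> = ennreal (real n ^ m * qf n l m x)"
      using Wf by (simp add: ennreal_of_nat_eq_real_of_nat ennreal_mult'[symmetric] del: ennreal_mult')
    finally show ?thesis .
  qed
  have disjA: "disjoint_family A"
    by (auto simp: disjoint_family_on_def A_def W_def dest: RR_unique)
  have "emeasure (QQ l) (\<Union>m. A m) = (\<Sum>m. emeasure (QQ l) (A m))"
    using As disjA by (intro suminf_emeasure[symmetric]) auto
  also have "\<dots> = (\<Sum>m. ennreal (real n ^ m * qf n l m x))" by (simp add: eA)
  also have "\<dots> = ennreal 1"
    using exp_series_sum[of n l x] x l by (intro suminf_ennreal_eq) (auto simp: qf_def)
  finally have e1: "emeasure (QQ l) (\<Union>m. A m) = 1" by simp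
  have "(\<Union>m. A m) \<in> sets (QQ l)" using As by auto
  then have "AE G in QQ l. G \<in> (\<Union>m. A m)"
    using e1 by (subst Q.AE_in_set_eq_1) (auto simp: Q.emeasure_eq_measure)
  then show ?thesis
    by (rule AE_mp) (auto simp: A_def W_def)
qed


definition chainset :: "(real \<times> nat) set \<Rightarrow> nat set" where
  "chainset P = {length c | c. set c \<subseteq> P \<and> sorted_wrt chain_prec c}"

lemma mcl_def2: "max_chain_len P = Max (chainset P)"
  by (simp add: max_chain_len_def chainset_def)

lemma chain_distinct: "sorted_wrt chain_prec c \<Longrightarrow> distinct c"
  by (rule sorted_wrt_fst_distinct) (auto elim: sorted_wrt_mono_rel[rotated] simp: chain_prec_def)

lemma chain_len_le_card: "finite P \<Longrightarrow> set c \<subseteq> P \<Longrightarrow> sorted_wrt chain_prec c \<Longrightarrow> length c \<le> card P"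
  using chain_distinct distinct_card card_mono by metis

lemma chainset_finite: "finite P \<Longrightarrow> finite (chainset P)"
  by (rule finite_subset[of _ "{..card P}"]) (auto simp: chainset_def intro: chain_len_le_card)

lemma chainset_ne: "chainset P \<noteq> {}"
  by (auto simp: chainset_def intro!: exI[of _ "[]"])

lemma max_chain_ge: "finite P \<Longrightarrow> set c \<subseteq> P \<Longrightarrow> sorted_wrt chain_prec c \<Longrightarrow> length c \<le> max_chain_len P"
  unfolding mcl_def2 by (rule Max_ge[OF chainset_finite]) (auto simp: chainset_def)

lemma max_chain_le_card: "finite P \<Longrightarrow> max_chain_len P \<le> card P"
  unfolding mcl_def2 using chainset_finite chainset_ne
  by (subst Max_le_iff) (auto simp: chainset_def intro: chain_len_le_card)

lemma max_chain_mono: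
  assumes "finite P'"
    and "\<And>c. set c \<subseteq> P \<Longrightarrow> sorted_wrt chain_prec c \<Longrightarrow> \<exists>c'. set c' \<subseteq> P' \<and> sorted_wrt chain_prec c' \<and> length c' = length c"
  shows "max_chain_len P \<le> max_chain_len P'"
  unfolding mcl_def2
proof (rule Max_mono)
  show "chainset P \<subseteq> chainset P'"
  proof
    fix k assume "k \<in> chainset P"
    then obtain c where c: "k = length c" "set c \<subseteq> P" "sorted_wrt chain_prec c" by (auto simp: chainset_def)
    from assms(2)[OF c(2,3)] obtain c' where "set c' \<subseteq> P'" "sorted_wrt chain_prec c'" "length c' = length c" by blast
    then show "k \<in> chainset P'" using c(1) unfolding chainset_def by (intro CollectI exI[of _ c']) auto
  qed
qed (use chainset_ne chainset_finite[OF assms(1)] in auto)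

lemma word_points_eq: "word_points s = (\<lambda>j. (real (j+1), s ! j)) ` {..<length s}"
  by (auto simp: word_points_def)

lemma word_points_finite: "finite (word_points s)"
  by (simp add: word_points_eq)

lemma max_chain_word_le_length: "max_chain_len (word_points s) \<le> length s"
proof -
  have "max_chain_len (word_points s) \<le> card (word_points s)"
    by (rule max_chain_le_card[OF word_points_finite])
  also have "\<dots> \<le> length s" unfolding word_points_eq by (rule order.trans[OF card_image_le]) auto
  finally show ?thesis .
qed

lemma max_chain_subset: "finite P' \<Longrightarrow> P \<subseteq> P' \<Longrightarrow> max_chain_len P \<le> max_chain_len P'"
  by (rule max_chain_mono) auto

lemma max_chain_word_sorted:
  assumes xs: "sorted_wrt (\<lambda>p q. fst p < fst q) xs"
  shows "max_chain_len (word_points (map snd xs)) \<le> max_chain_len (set xs)"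
proof (rule max_chain_mono)
  fix c assume c: "set c \<subseteq> word_points (map snd xs)" "sorted_wrt chain_prec c"
  define h where "h = (\<lambda>p::real\<times>nat. xs ! (nat \<lfloor>fst p\<rfloor> - 1))"
  have nj: "nat (1 + int j) = Suc j" for j by arith
  have hp: "p \<in> word_points (map snd xs) \<Longrightarrow> \<exists>j. j < length xs \<and> p = (real (j+1), snd (xs ! j)) \<and> h p = xs ! j" for p
    by (auto simp: word_points_def h_def nj)
  have "sorted_wrt chain_prec (map h c)"
    unfolding sorted_wrt_map
  proof (rule sorted_wrt_mono_rel[OF _ c(2)])
    fix p q assume pq: "p \<in> set c" "q \<in> set c" "chain_prec p q"
    obtain j where j: "j < length xs" "p = (real (j+1), snd (xs ! j))" "h p = xs ! j" using hp pq(1) c(1) by blast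
    obtain j' where j': "j' < length xs" "q = (real (j'+1), snd (xs ! j'))" "h q = xs ! j'" using hp pq(2) c(1) by blast
    have "j < j'" using pq(3) j j' by (simp add: chain_prec_def)
    then have "fst (xs ! j) < fst (xs ! j')" using xs j' by (simp add: sorted_wrt_iff_nth_less)
    then show "chain_prec (h p) (h q)" using pq(3) j j' by (simp add: chain_prec_def)
  qed
  moreover have "set (map h c) \<subseteq> set xs" using hp c(1) by fastforce
  ultimately show "\<exists>c'. set c' \<subseteq> set xs \<and> sorted_wrt chain_prec c' \<and> length c' = length c"
    by (intro exI[of _ "map h c"]) auto
qed simp

lemma count_le_max_chain:
  assumes xs: "sorted_wrt (\<lambda>p q. fst p < fst q) xs" and P: "finite P" "set xs \<subseteq> P"
  shows "count (mset (map snd xs)) i \<le> max_chain_len P"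
proof -
  have "sorted_wrt (\<lambda>p q. fst p < fst q) (filter (\<lambda>p. snd p = i) xs)" using xs by (rule sorted_wrt_filter)
  then have "sorted_wrt chain_prec (filter (\<lambda>p. snd p = i) xs)"
    by (rule sorted_wrt_mono_rel[rotated]) (auto simp: chain_prec_def)
  then have "length (filter (\<lambda>p. snd p = i) xs) \<le> max_chain_len P"
    using P by (intro max_chain_ge) auto
  then show ?thesis by (simp add: len_filter_snd)
qed

definition subl :: "'a list \<Rightarrow> bool list \<Rightarrow> 'a list" where
  "subl xs bs = map fst (filter snd (zip xs bs))"

lemma subl_set: "set (subl xs bs) \<subseteq> set xs"
  by (auto simp: subl_def dest: set_zip_leftD)

lemma subl_sorted: "sorted_wrt R xs \<Longrightarrow> sorted_wrt R (subl xs bs)"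
proof (induction xs arbitrary: bs)
  case Nil then show ?case by (simp add: subl_def)
next
  case (Cons a xs)
  show ?case
  proof (cases bs)
    case Nil then show ?thesis by (simp add: subl_def)
  next
    case (Cons b bs')
    have "sorted_wrt R (subl xs bs')" using Cons.IH Cons.prems by simp
    moreover have "\<forall>y\<in>set (subl xs bs'). R a y" using Cons.prems subl_set[of xs bs'] by auto
    ultimately show ?thesis using Cons by (auto simp: subl_def)
  qed
qed

lemma subl_map: "map f (subl xs bs) = subl (map f xs) bs"
proof (induction xs arbitrary: bs)
  case Nil then show ?case by (simp add: subl_def)
next
  case (Cons a xs) then show ?case by (cases bs) (auto simp: subl_def)
qed

lemma max_chain_subl:
  assumes xs: "sorted_wrt (\<lambda>p q. fst p < fst q) xs" and P: "finite P" "set xs \<subseteq> P"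
  shows "max_chain_len (word_points (subl (map snd xs) bs)) \<le> max_chain_len P"
proof -
  have "max_chain_len (word_points (subl (map snd xs) bs)) = max_chain_len (word_points (map snd (subl xs bs)))"
    by (simp add: subl_map)
  also have "\<dots> \<le> max_chain_len (set (subl xs bs))"
    by (rule max_chain_word_sorted[OF subl_sorted[OF xs]])
  also have "\<dots> \<le> max_chain_len P"
    using P subl_set[of xs bs] by (intro max_chain_subset) auto
  finally show ?thesis .
qed


fun marks :: "nat list \<Rightarrow> (nat \<Rightarrow> bool list) \<Rightarrow> bool list" where
  "marks [] \<beta> = []"
| "marks (a#u) \<beta> = hd (\<beta> a) # marks u (\<beta>(a := tl (\<beta> a)))"

definition sel :: "nat list \<Rightarrow> (nat \<Rightarrow> bool list) \<Rightarrow> nat list" where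
  "sel u \<beta> = subl u (marks u \<beta>)"

definition Wc :: "nat \<Rightarrow> (nat \<Rightarrow> nat) \<Rightarrow> nat list set" where
  "Wc n c = {u. set u \<subseteq> {1..n} \<and> (\<forall>i\<in>{1..n}. count (mset u) i = c i)}"

definition Bc :: "nat \<Rightarrow> nat \<Rightarrow> (nat \<Rightarrow> nat) \<Rightarrow> (nat \<Rightarrow> bool list) set" where
  "Bc n k c = {\<beta>. (\<forall>i\<in>{1..n}. length (\<beta> i) = c i \<and> count (mset (\<beta> i)) True = k) \<and> (\<forall>i. i \<notin> {1..n} \<longrightarrow> \<beta> i = [])}"

definition fiber :: "nat \<Rightarrow> nat \<Rightarrow> (nat \<Rightarrow> nat) \<Rightarrow> nat list \<Rightarrow> (nat list \<times> (nat \<Rightarrow> bool list)) set" where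
  "fiber n k c w = {(u,\<beta>). u \<in> Wc n c \<and> \<beta> \<in> Bc n k c \<and> sel u \<beta> = w}"

definition unm :: "nat \<Rightarrow> (nat \<times> bool) list \<Rightarrow> nat \<Rightarrow> bool list" where
  "unm n um = (\<lambda>i. if i \<in> {1..n} then map snd (filter (\<lambda>p. fst p = i) um) else [])"

definition MWs :: "nat \<Rightarrow> (nat \<Rightarrow> nat) \<Rightarrow> nat list \<Rightarrow> (nat \<times> bool) list set" where
  "MWs n c w = {um. set (map fst um) \<subseteq> {1..n} \<and> (\<forall>i\<in>{1..n}. count (mset (map fst um)) i = c i) \<and> map fst (filter snd um) = w}"

lemma len_marks[simp]: "length (marks u \<beta>) = length u"
  by (induction u arbitrary: \<beta>) auto

lemma marks_take:
  "(\<forall>a\<in>set u. count (mset u) a \<le> length (\<beta> a)) \<Longrightarrow>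
    map snd (filter (\<lambda>p. fst p = i) (zip u (marks u \<beta>))) = take (count (mset u) i) (\<beta> i)"
proof (induction u arbitrary: \<beta>)
  case Nil then show ?case by simp
next
  case (Cons a u)
  let ?\<beta>' = "\<beta>(a := tl (\<beta> a))"
  have pre: "\<forall>b\<in>set u. count (mset u) b \<le> length (?\<beta>' b)"
  proof
    fix b assume b: "b \<in> set u"
    have "count (mset (a#u)) b \<le> length (\<beta> b)" using Cons.prems b by auto
    then show "count (mset u) b \<le> length (?\<beta>' b)" by (cases "b = a") auto
  qed
  note IH = Cons.IH[OF pre]
  have ne: "\<beta> a \<noteq> []" using Cons.prems by (cases "\<beta> a") auto
  show ?case
  proof (cases "i = a")
    case True
    have "take (Suc (count (mset u) a)) (\<beta> a) = hd (\<beta> a) # take (count (mset u) a) (tl (\<beta> a))"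
      using ne by (cases "\<beta> a") auto
    then show ?thesis using True IH by (simp add: fun_upd_def)
  next
    case False
    then show ?thesis using IH by (simp add: fun_upd_def)
  qed
qed

lemma unm_f1: "u \<in> Wc n c \<Longrightarrow> \<beta> \<in> Bc n k c \<Longrightarrow> unm n (zip u (marks u \<beta>)) = \<beta>"
proof (rule ext)
  fix i assume u: "u \<in> Wc n c" and b: "\<beta> \<in> Bc n k c"
  have pre: "\<forall>a\<in>set u. count (mset u) a \<le> length (\<beta> a)"
    using u b by (auto simp: Wc_def Bc_def)
  show "unm n (zip u (marks u \<beta>)) i = \<beta> i"
  proof (cases "i \<in> {1..n}")
    case True
    then show ?thesis using marks_take[OF pre, of i] u b by (simp add: unm_def Wc_def Bc_def)
  next
    case False
    then show ?thesis using b by (auto simp: unm_def Bc_def)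
  qed
qed

lemma marks_unm: "set (map fst um) \<subseteq> {1..n} \<Longrightarrow> marks (map fst um) (unm n um) = map snd um"
proof (induction um)
  case Nil then show ?case by simp
next
  case (Cons p um)
  obtain a b where p: "p = (a,b)" by (cases p)
  have a: "a \<in> {1..n}" using Cons.prems p by auto
  have 1: "unm n (p#um) a = b # unm n um a" using a p by (simp add: unm_def)
  have 2: "(unm n (p#um))(a := tl (unm n (p#um) a)) = unm n um"
    using a p by (auto simp: unm_def fun_eq_iff)
  show ?case using Cons p 1 2 by simp
qed

lemma count_true_filter:
  "count (mset (map snd (filter (\<lambda>p. fst p = i) um))) True = count (mset (map fst (filter snd um))) i"
  by (induction um) auto

lemma length_filter_fst:
  "length (filter (\<lambda>p. fst p = i) um) = count (mset (map fst um)) i"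
  by (induction um) auto

lemma subl_zip: "subl (map fst um) (map snd um) = map fst (filter snd um)"
  by (simp add: subl_def zip_map_fst_snd)

lemma MP_mset_eq:
  assumes "w \<in> multiset_perms n k" "w' \<in> multiset_perms n k"
  shows "mset w = mset w'"
proof (rule multiset_eqI)
  fix x show "count (mset w) x = count (mset w') x"
  proof (cases "x \<in> {1..n}")
    case True then show ?thesis using assms by (simp add: multiset_perms_def)
  next
    case False
    then have "x \<notin> set w" "x \<notin> set w'" using assms by (auto simp: multiset_perms_def)
    then show ?thesis by (metis count_mset_0_iff set_mset_mset)
  qed
qed

lemma fiber_MWs: "w \<in> multiset_perms n k \<Longrightarrow> bij_betw (\<lambda>(u,\<beta>). zip u (marks u \<beta>)) (fiber n k c w) (MWs n c w)"
proof (rule bij_betw_byWitness[where f' = "\<lambda>um. (map fst um, unm n um)"])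
  assume w: "w \<in> multiset_perms n k"
  show "\<forall>a\<in>fiber n k c w. (\<lambda>um. (map fst um, unm n um)) ((\<lambda>(u,\<beta>). zip u (marks u \<beta>)) a) = a"
    by (auto simp: fiber_def unm_f1)
  show "\<forall>a'\<in>MWs n c w. (\<lambda>(u,\<beta>). zip u (marks u \<beta>)) ((\<lambda>um. (map fst um, unm n um)) a') = a'"
    by (auto simp: MWs_def marks_unm zip_map_fst_snd)
  show "(\<lambda>(u,\<beta>). zip u (marks u \<beta>)) ` fiber n k c w \<subseteq> MWs n c w"
  proof (rule image_subsetI)
    fix x assume "x \<in> fiber n k c w"
    then obtain u \<beta> where x: "x = (u,\<beta>)" "u \<in> Wc n c" "sel u \<beta> = w" by (auto simp: fiber_def)
    have m: "map fst (zip u (marks u \<beta>)) = u" by (simp add: map_fst_zip)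
    have "zip u (marks u \<beta>) \<in> MWs n c w"
      unfolding MWs_def mem_Collect_eq m using x by (simp add: Wc_def sel_def subl_def)
    then show "(\<lambda>(u,\<beta>). zip u (marks u \<beta>)) x \<in> MWs n c w" using x(1) by simp
  qed
  show "(\<lambda>um. (map fst um, unm n um)) ` MWs n c w \<subseteq> fiber n k c w"
  proof safe
    fix um assume um: "um \<in> MWs n c w"
    have "unm n um \<in> Bc n k c"
      unfolding Bc_def mem_Collect_eq
    proof (intro conjI ballI allI impI)
      fix i assume i: "i \<in> {1..n}"
      have ui: "unm n um i = map snd (filter (\<lambda>p. fst p = i) um)" using i by (simp add: unm_def)
      show "length (unm n um i) = c i" using um i by (simp add: ui length_filter_fst MWs_def)
      have "count (mset (unm n um i)) True = count (mset (map fst (filter snd um))) i"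
        unfolding ui by (rule count_true_filter)
      also have "\<dots> = k" using um w i by (simp add: MWs_def multiset_perms_def)
      finally show "count (mset (unm n um i)) True = k" .
    next
      fix i :: nat assume "i \<notin> {1..n}" then show "unm n um i = []" by (auto simp: unm_def)
    qed
    moreover have "map fst um \<in> Wc n c" using um by (auto simp: Wc_def MWs_def)
    moreover have "sel (map fst um) (unm n um) = w"
      using um by (simp add: sel_def MWs_def marks_unm subl_zip)
    ultimately show "(map fst um, unm n um) \<in> fiber n k c w" by (simp add: fiber_def)
  qed
qed

fun relab :: "(nat \<times> bool) list \<Rightarrow> nat list \<Rightarrow> (nat \<times> bool) list" where
  "relab [] w = []"
| "relab (p#um) w = (if snd p then (hd w, True) # relab um (tl w) else p # relab um w)"

lemma relab1: "length (filter snd um) = length w \<Longrightarrow> map fst (filter snd (relab um w)) = w"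
proof (induction um arbitrary: w)
  case Nil then show ?case by simp
next
  case (Cons p um)
  show ?case
  proof (cases "snd p")
    case True
    with Cons.prems obtain x xs where "w = x # xs" by (cases w) auto
    with True Cons show ?thesis by (cases p) auto
  next
    case False with Cons show ?thesis by auto
  qed
qed

lemma relab2: "filter (\<lambda>p. \<not> snd p) (relab um w) = filter (\<lambda>p. \<not> snd p) um"
  by (induction um arbitrary: w) auto

lemma relab3: "length (filter snd um) = length w \<Longrightarrow> relab (relab um w) (map fst (filter snd um)) = um"
proof (induction um arbitrary: w)
  case Nil then show ?case by simp
next
  case (Cons p um)
  show ?case
  proof (cases "snd p")
    case True
    with Cons.prems obtain x xs where "w = x # xs" by (cases w) auto
    with True Cons show ?thesis by (cases p) auto
  next
    case False with Cons show ?thesis by auto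
  qed
qed

lemma mset_split_marks: "mset (map fst um) = mset (map fst (filter snd um)) + mset (map fst (filter (\<lambda>p. \<not> snd p) um))"
  by (induction um) auto

lemma relab_mset:
  assumes "length (filter snd um) = length w'" "mset (map fst (filter snd um)) = mset w'"
  shows "mset (map fst (relab um w')) = mset (map fst um)"
proof -
  have "mset (map fst (relab um w')) = mset (map fst (filter snd (relab um w'))) + mset (map fst (filter (\<lambda>p. \<not> snd p) (relab um w')))"
    by (rule mset_split_marks)
  also have "\<dots> = mset w' + mset (map fst (filter (\<lambda>p. \<not> snd p) um))"
    using assms(1) by (simp add: relab1 relab2)
  also have "\<dots> = mset (map fst um)"
    by (metis assms(2) mset_split_marks)
  finally show ?thesis .
qed

lemma MWs_bij:
  assumes w: "w \<in> multiset_perms n k" and w': "w' \<in> multiset_perms n k"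
  shows "bij_betw (\<lambda>um. relab um w') (MWs n c w) (MWs n c w')"
proof (rule bij_betw_byWitness[where f' = "\<lambda>um. relab um w"])
  have lw: "length w = length w'" using w w' by (simp add: multiset_perms_def)
  have mw: "mset w = mset w'" by (rule MP_mset_eq[OF w w'])
  show "\<forall>a\<in>MWs n c w. relab (relab a w') w = a"
  proof
    fix a assume "a \<in> MWs n c w"
    then have "map fst (filter snd a) = w" by (simp add: MWs_def)
    moreover then have "length (filter snd a) = length w'" using lw by (metis length_map)
    ultimately show "relab (relab a w') w = a" using relab3[of a w'] by simp
  qed
  show "\<forall>a'\<in>MWs n c w'. relab (relab a' w) w' = a'"
  proof
    fix a assume "a \<in> MWs n c w'"
    then have "map fst (filter snd a) = w'" by (simp add: MWs_def)
    moreover then have "length (filter snd a) = length w" using lw by (metis length_map)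
    ultimately show "relab (relab a w) w' = a" using relab3[of a w] by simp
  qed
  have img: "relab um v \<in> MWs n c v" if um: "um \<in> MWs n c v0" and l: "length v0 = length v" and m: "mset v0 = mset v" for um v v0
  proof -
    have fl: "length (filter snd um) = length v" using um l by (auto simp: MWs_def dest: arg_cong[where f=length])
    have me: "mset (map fst (relab um v)) = mset (map fst um)"
      using um m fl by (intro relab_mset) (auto simp: MWs_def)
    have "set (map fst (relab um v)) = set (map fst um)"
      using me by (metis set_mset_mset)
    then show ?thesis using um me relab1[OF fl] by (auto simp: MWs_def)
  qed
  show "(\<lambda>um. relab um w') ` MWs n c w \<subseteq> MWs n c w'" using img[of _ w w'] lw mw by auto
  show "(\<lambda>um. relab um w) ` MWs n c w' \<subseteq> MWs n c w" using img[of _ w' w] lw mw by auto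
qed

theorem fiber_card_eq:
  assumes "w \<in> multiset_perms n k" "w' \<in> multiset_perms n k"
  shows "card (fiber n k c w) = card (fiber n k c w')"
proof -
  have "card (fiber n k c w) = card (MWs n c w)" by (rule bij_betw_same_card[OF fiber_MWs[OF assms(1)]])
  also have "\<dots> = card (MWs n c w')" by (rule bij_betw_same_card[OF MWs_bij[OF assms]])
  also have "\<dots> = card (fiber n k c w')" by (rule bij_betw_same_card[OF fiber_MWs[OF assms(2)], symmetric])
  finally show ?thesis .
qed

lemma sel_MP:
  assumes u: "u \<in> Wc n c" and b: "\<beta> \<in> Bc n k c"
  shows "sel u \<beta> \<in> multiset_perms n k"
proof -
  have pre: "\<forall>a\<in>set u. count (mset u) a \<le> length (\<beta> a)"
    using u b by (auto simp: Wc_def Bc_def)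
  have cnt: "count (mset (sel u \<beta>)) i = k" if i: "i \<in> {1..n}" for i
  proof -
    have "count (mset (sel u \<beta>)) i = count (mset (map snd (filter (\<lambda>p. fst p = i) (zip u (marks u \<beta>))))) True"
      unfolding sel_def subl_def by (rule count_true_filter[symmetric])
    also have "\<dots> = count (mset (take (count (mset u) i) (\<beta> i))) True"
      by (simp add: marks_take[OF pre])
    also have "\<dots> = k" using u b i by (simp add: Wc_def Bc_def)
    finally show ?thesis .
  qed
  have st: "set (sel u \<beta>) \<subseteq> {1..n}"
    using u subl_set[of u "marks u \<beta>"] by (auto simp: sel_def Wc_def)
  have "length (sel u \<beta>) = (\<Sum>i\<in>{1..n}. count_list (sel u \<beta>) i)"
    using st by (simp add: sum_count_set)
  also have "\<dots> = (\<Sum>i\<in>{1..n}. k)" using cnt by (simp add: count_mset[symmetric])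
  also have "\<dots> = k * n" by simp
  finally show ?thesis using st cnt by (simp add: multiset_perms_def)
qed


fun wblock :: "nat \<Rightarrow> nat \<Rightarrow> nat list" where
  "wblock k 0 = []"
| "wblock k (Suc m) = wblock k m @ replicate k (Suc m)"

lemma wblock_props:
  "set (wblock k m) \<subseteq> {1..m} \<and> length (wblock k m) = k * m \<and> (\<forall>a\<in>{1..m}. count (mset (wblock k m)) a = k)"
proof (induction m)
  case 0 then show ?case by simp
next
  case (Suc m)
  have c0: "count (mset (wblock k m)) (Suc m) = 0"
    using Suc by (auto simp: count_mset_0_iff)
  show ?case
  proof (intro conjI ballI)
    show "set (wblock k (Suc m)) \<subseteq> {1..Suc m}" using Suc by auto
    show "length (wblock k (Suc m)) = k * Suc m" using Suc by simp
  next
    fix a assume a: "a \<in> {1..Suc m}"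
    show "count (mset (wblock k (Suc m))) a = k"
    proof (cases "a = Suc m")
      case True then show ?thesis using c0 by simp
    next
      case False then show ?thesis using Suc a by auto
    qed
  qed
qed

lemma MP_ne: "wblock k n \<in> multiset_perms n k"
  using wblock_props[of k n] by (simp add: multiset_perms_def)

lemma MP_finite: "finite (multiset_perms n k)"
  by (rule finite_subset[of _ "{xs. set xs \<subseteq> {1..n} \<and> length xs = k * n}"])
     (auto simp: multiset_perms_def intro: finite_lists_length_eq)

lemma Bc_finite: "finite (Bc n k c)"
proof -
  have "Bc n k c \<subseteq> (\<lambda>f i. if i \<in> {1..n} then f i else []) ` (PiE {1..n} (\<lambda>i. {bs. set bs \<subseteq> UNIV \<and> length bs = c i}))"
  proof
    fix \<beta> assume b: "\<beta> \<in> Bc n k c"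
    show "\<beta> \<in> (\<lambda>f i. if i \<in> {1..n} then f i else []) ` (PiE {1..n} (\<lambda>i. {bs. set bs \<subseteq> UNIV \<and> length bs = c i}))"
      using b by (intro image_eqI[where x="restrict \<beta> {1..n}"]) (auto simp: Bc_def fun_eq_iff)
  qed
  moreover have "finite (PiE {1..n} (\<lambda>i. {bs. set bs \<subseteq> (UNIV::bool set) \<and> length bs = c i}))"
    by (intro finite_PiE finite_lists_length_eq) auto
  ultimately show ?thesis by (rule finite_subset[OF _ finite_imageI])
qed

lemma Bc_ne:
  assumes "\<forall>i\<in>{1..n}. k \<le> c i"
  shows "(\<lambda>i. if i \<in> {1..n} then replicate k True @ replicate (c i - k) False else []) \<in> Bc n k c"
  using assms by (auto simp: Bc_def)

lemma Wc_length: "u \<in> Wc n c \<Longrightarrow> length u = (\<Sum>i\<in>{1..n}. c i)"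
proof -
  assume u: "u \<in> Wc n c"
  have "length u = (\<Sum>i\<in>{1..n}. count_list u i)" using u by (simp add: sum_count_set Wc_def)
  also have "\<dots> = (\<Sum>i\<in>{1..n}. c i)" using u by (simp add: Wc_def count_mset[symmetric])
  finally show ?thesis .
qed

lemma Wc_finite: "finite (Wc n c)"
  by (rule finite_subset[of _ "{xs. set xs \<subseteq> {1..n} \<and> length xs = (\<Sum>i\<in>{1..n}. c i)}"])
     (use Wc_length in \<open>auto simp: Wc_def intro: finite_lists_length_eq\<close>)

lemma sum_mod_blocks:
  fixes g :: "nat \<Rightarrow> nat"
  shows "(\<Sum>r\<in>{0..<b*m}. g (r mod b)) = m * (\<Sum>r\<in>{0..<b}. g r)"
proof (induction m)
  case 0 then show ?case by simp
next
  case (Suc m)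
  have "{0..<b * Suc m} = {0..<b*m} \<union> {b*m..<b*m+b}" by (auto simp: algebra_simps)
  then have "(\<Sum>r\<in>{0..<b*Suc m}. g (r mod b)) = (\<Sum>r\<in>{0..<b*m}. g (r mod b)) + (\<Sum>r\<in>{b*m..<b*m+b}. g (r mod b))"
    by (simp add: sum.union_disjoint)
  also have "(\<Sum>r\<in>{b*m..<b*m+b}. g (r mod b)) = (\<Sum>r\<in>{0..<b}. g ((r + b*m) mod b))"
    using sum.shift_bounds_nat_ivl[of "\<lambda>r. g (r mod b)" 0 "b*m" b] by (simp add: add.commute)
  also have "\<dots> = (\<Sum>r\<in>{0..<b}. g r)" by (intro sum.cong) auto
  finally show ?case using Suc by simp
qed


locale CP =
  fixes n k :: nat and lam :: real
  assumes n1: "1 \<le> n" and k1: "1 \<le> k" and lam: "0 < lam"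
begin

definition xx :: real where "xx = real (n * k)"
definition good :: "nat list \<Rightarrow> bool" where
  "good u \<longleftrightarrow> set u \<subseteq> {1..n} \<and> (\<forall>i\<in>{1..n}. k \<le> count (mset u) i \<and> count (mset u) i \<le> n * k)"
definition cnt :: "nat list \<Rightarrow> nat \<Rightarrow> nat" where
  "cnt u = (\<lambda>i. if i \<in> {1..n} then count (mset u) i else 0)"
definition Good :: "nat list set" where "Good = {u. good u}"
definition Cset :: "(nat \<Rightarrow> nat) set" where "Cset = cnt ` Good"
definition bsz :: "(nat \<Rightarrow> nat) \<Rightarrow> nat" where "bsz c = card (Bc n k c)"
definition enum :: "(nat \<Rightarrow> nat) \<Rightarrow> nat \<Rightarrow> (nat \<Rightarrow> bool list)" where
  "enum c = (SOME f. bij_betw f {0..<bsz c} (Bc n k c))"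
definition KK :: nat where "KK = (\<Prod>c\<in>Cset. bsz c)"
definition ZZ :: "nat list set" where "ZZ = (\<lambda>(r,w0). r # w0) ` ({0..<KK} \<times> multiset_perms n k)"
definition wfix :: "nat list" where "wfix = wblock k n"
definition Uo :: "(nat\<times>nat \<Rightarrow> real) \<Rightarrow> nat list option" where
  "Uo G = (if \<exists>u. good u \<and> RR n u xx G then Some (THE u. good u \<and> RR n u xx G) else None)"
definition Fsel :: "nat list \<Rightarrow> nat list option \<Rightarrow> nat list" where
  "Fsel l v = (case v of Some u \<Rightarrow> sel u (enum (cnt u) (hd l mod bsz (cnt u)))
       | None \<Rightarrow> (if tl l \<in> multiset_perms n k then tl l else wfix))"
definition SS :: "nat list \<times> (nat\<times>nat \<Rightarrow> real) \<Rightarrow> nat list" where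
  "SS \<omega> = Fsel (fst \<omega>) (Uo (snd \<omega>))"
definition MM :: "(nat list \<times> (nat\<times>nat \<Rightarrow> real)) measure" where
  "MM = measure_pmf (pmf_of_set ZZ) \<Otimes>\<^sub>M QQ lam"

lemma xx_nonneg: "0 \<le> xx" by (simp add: xx_def)

lemma good_len: "good u \<Longrightarrow> length u \<le> n * (n * k)"
proof -
  assume g: "good u"
  have "length u = (\<Sum>i\<in>{1..n}. count_list u i)" using g by (simp add: sum_count_set good_def)
  also have "\<dots> \<le> (\<Sum>i\<in>{1..n}. n * k)" using g by (intro sum_mono) (simp add: good_def count_mset[symmetric])
  finally show ?thesis by simp
qed

lemma Good_finite: "finite Good"
proof -
  have "Good \<subseteq> {xs. set xs \<subseteq> {1..n} \<and> length xs \<le> n * (n * k)}"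
    using good_len by (auto simp: Good_def good_def)
  moreover have "finite {xs. set xs \<subseteq> {1..n} \<and> length xs \<le> n * (n * k)}"
    by (rule finite_lists_length_le) simp
  ultimately show ?thesis by (rule finite_subset)
qed

lemma Cset_finite: "finite Cset"
  unfolding Cset_def using Good_finite by simp

lemma good_Wc: "good u \<Longrightarrow> u \<in> Wc n (cnt u)"
  by (simp add: good_def Wc_def cnt_def)

lemma Cset_bounds: "c \<in> Cset \<Longrightarrow> (\<forall>i\<in>{1..n}. k \<le> c i \<and> c i \<le> n * k) \<and> (\<forall>i. i \<notin> {1..n} \<longrightarrow> c i = 0)"
  by (auto simp: Cset_def Good_def good_def cnt_def)

lemma Wc_good:
  assumes c: "c \<in> Cset" and u: "u \<in> Wc n c"
  shows "good u \<and> cnt u = c"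
proof
  have b1: "\<forall>i\<in>{1..n}. k \<le> c i \<and> c i \<le> n * k" and b2: "\<forall>i. i \<notin> {1..n} \<longrightarrow> c i = 0"
    using Cset_bounds[OF c] by blast+
  have u1: "set u \<subseteq> {1..n}" and u2: "\<forall>i\<in>{1..n}. count (mset u) i = c i"
    using u unfolding Wc_def by blast+
  show "good u" unfolding good_def using u1 u2 b1 by simp
  show "cnt u = c"
  proof
    fix i show "cnt u i = c i" using u2 b2 by (cases "i \<in> {1..n}") (auto simp: cnt_def)
  qed
qed

lemma bsz_pos:
  assumes c: "c \<in> Cset" shows "0 < bsz c"
proof -
  have "\<forall>i\<in>{1..n}. k \<le> c i" using Cset_bounds[OF c] by blast
  then have "Bc n k c \<noteq> {}" using Bc_ne[of n k c] by blast
  then show ?thesis unfolding bsz_def using Bc_finite[of n k c] by (simp add: card_gt_0_iff)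
qed

lemma enum_bij: "bij_betw (enum c) {0..<bsz c} (Bc n k c)"
  unfolding enum_def bsz_def
  by (rule someI_ex[OF ex_bij_betw_nat_finite[OF Bc_finite]])

lemma KK_pos: "0 < KK"
  unfolding KK_def using bsz_pos Cset_finite by (simp add: prod_pos)

lemma bsz_dvd: "c \<in> Cset \<Longrightarrow> bsz c dvd KK"
  unfolding KK_def by (rule dvd_prodI[OF Cset_finite])

lemma inj_cons: "inj_on (\<lambda>(r,w0). (r::nat) # w0) X"
  by (auto simp: inj_on_def)

lemma ZZ_finite: "finite ZZ"
  unfolding ZZ_def using MP_finite by simp

lemma ZZ_ne: "ZZ \<noteq> {}"
  unfolding ZZ_def using KK_pos MP_ne[of k n] by auto

lemma card_ZZ: "card ZZ = KK * card (multiset_perms n k)"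
  unfolding ZZ_def by (subst card_image[OF inj_cons]) (simp add: card_cartesian_product)

lemma Uo_Some: "Uo G = Some u \<longleftrightarrow> good u \<and> RR n u xx G"
proof
  assume "Uo G = Some u"
  then have ex: "\<exists>u. good u \<and> RR n u xx G" and u: "u = (THE u. good u \<and> RR n u xx G)"
    by (auto simp: Uo_def split: if_splits)
  from ex obtain v where v: "good v \<and> RR n v xx G" by blast
  have "(THE u. good u \<and> RR n u xx G) = v"
    using v by (intro the_equality) (auto dest: RR_unique)
  then show "good u \<and> RR n u xx G" using u v by simp
next
  assume u: "good u \<and> RR n u xx G"
  then have "(THE u. good u \<and> RR n u xx G) = u"
    by (intro the_equality) (auto dest: RR_unique)
  then show "Uo G = Some u" using u by (auto simp: Uo_def)
qed

lemma Uo_None: "Uo G = None \<longleftrightarrow> (\<forall>u. good u \<longrightarrow> \<not> RR n u xx G)"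
  by (auto simp: Uo_def)

lemma enum_in: "c \<in> Cset \<Longrightarrow> enum c (r mod bsz c) \<in> Bc n k c"
  using enum_bij[of c] bsz_pos[of c] by (auto simp: bij_betw_def)

lemma Fsel_MP: "Fsel l v \<in> multiset_perms n k \<or> (\<exists>u. v = Some u \<and> \<not> good u)"
proof (cases v)
  case None
  then show ?thesis using MP_ne[of k n] by (auto simp: Fsel_def wfix_def)
next
  case (Some u)
  show ?thesis
  proof (cases "good u")
    case True
    then have c: "cnt u \<in> Cset" by (auto simp: Cset_def Good_def)
    have "sel u (enum (cnt u) (hd l mod bsz (cnt u))) \<in> multiset_perms n k"
      by (rule sel_MP[OF good_Wc[OF True] enum_in[OF c]])
    then show ?thesis using Some by (simp add: Fsel_def)
  qed (use Some in auto)
qed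

lemma SS_MP: "SS \<omega> \<in> multiset_perms n k"
proof -
  have "\<not> (\<exists>u. Uo (snd \<omega>) = Some u \<and> \<not> good u)" by (auto simp: Uo_Some)
  then show ?thesis using Fsel_MP[of "fst \<omega>" "Uo (snd \<omega>)"] by (auto simp: SS_def)
qed

end


context CP begin

lemma prob_MM: "prob_space MM"
proof -
  interpret E: prob_space "measure_pmf (pmf_of_set ZZ)" by (rule prob_space_measure_pmf)
  interpret Q: prob_space "QQ lam" by (rule prob_QQ[OF lam])
  interpret pair_prob_space "measure_pmf (pmf_of_set ZZ)" "QQ lam" by unfold_locales
  show ?thesis unfolding MM_def by unfold_locales
qed

lemma sets_MM: "sets MM = sets (count_space UNIV \<Otimes>\<^sub>M QQ lam)"
  unfolding MM_def by (rule sets_pair_measure_cong) auto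

lemma space_MM[simp]: "space MM = UNIV"
  by (simp add: MM_def space_pair_measure)

lemma Good_RR_sets: "{G. \<exists>u\<in>Good. RR n u xx G} \<in> sets (QQ lam)"
proof -
  have "{G. \<exists>u\<in>Good. RR n u xx G} = (\<Union>u\<in>Good. {G. RR n u xx G})" by auto
  also have "\<dots> \<in> sets (QQ lam)" using Good_finite by (intro sets.finite_UN RR_sets) auto
  finally show ?thesis .
qed

lemma Uo_meas: "Uo \<in> measurable (QQ lam) (count_space UNIV)"
proof (subst measurable_count_space_eq2_countable, intro conjI ballI)
  show "Uo \<in> space (QQ lam) \<rightarrow> UNIV" by simp
next
  fix a :: "nat list option"
  show "Uo -` {a} \<inter> space (QQ lam) \<in> sets (QQ lam)"
  proof (cases a)
    case None
    have "Uo -` {a} \<inter> space (QQ lam) = space (QQ lam) - {G. \<exists>u\<in>Good. RR n u xx G}"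
      using None by (auto simp: Uo_None Good_def)
    then show ?thesis using sets.compl_sets[OF Good_RR_sets] by simp
  next
    case (Some u)
    have "Uo -` {a} \<inter> space (QQ lam) = (if good u then {G. RR n u xx G} else {})"
      using Some by (auto simp: Uo_Some)
    then show ?thesis using RR_sets by auto
  qed
qed

lemma SS_meas: "SS \<in> measurable MM (count_space UNIV)"
proof -
  have 1: "(\<lambda>\<omega>. (fst \<omega>, Uo (snd \<omega>))) \<in> measurable MM (count_space UNIV \<Otimes>\<^sub>M count_space UNIV)"
  proof (intro measurable_Pair)
    show "(\<lambda>\<omega>. fst \<omega>) \<in> measurable MM (count_space UNIV)"
      unfolding MM_def by (rule measurable_compose[OF measurable_fst]) (simp add: measurable_cong_sets)
    show "(\<lambda>\<omega>. Uo (snd \<omega>)) \<in> measurable MM (count_space UNIV)"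
      unfolding MM_def by (rule measurable_compose[OF measurable_snd Uo_meas])
  qed
  have 2: "count_space UNIV \<Otimes>\<^sub>M count_space UNIV = count_space (UNIV :: (nat list \<times> nat list option) set)"
    using pair_measure_countable[of "UNIV :: nat list set" "UNIV :: nat list option set"] by simp
  have 3: "(\<lambda>(l,v). Fsel l v) \<in> measurable (count_space UNIV) (count_space UNIV)" by simp
  have "(\<lambda>\<omega>. (\<lambda>(l,v). Fsel l v) (fst \<omega>, Uo (snd \<omega>))) \<in> measurable MM (count_space UNIV)"
    by (rule measurable_compose[OF 1[unfolded 2] 3])
  then show ?thesis by (simp add: SS_def[abs_def])
qed

lemma distr_snd_MM: "distr MM (QQ lam) snd = QQ lam"
proof (rule measure_eqI)
  interpret E: prob_space "measure_pmf (pmf_of_set ZZ)" by (rule prob_space_measure_pmf)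
  interpret Q: prob_space "QQ lam" by (rule prob_QQ[OF lam])
  fix A assume A: "A \<in> sets (distr MM (QQ lam) snd)"
  then have A': "A \<in> sets (QQ lam)" by simp
  have "emeasure (distr MM (QQ lam) snd) A = emeasure MM (UNIV \<times> A)"
    using A' unfolding MM_def by (subst emeasure_distr) (auto simp: space_pair_measure intro!: arg_cong[where f="emeasure _"])
  also have "\<dots> = emeasure (measure_pmf (pmf_of_set ZZ)) UNIV * emeasure (QQ lam) A"
    unfolding MM_def using A' by (intro Q.emeasure_pair_measure_Times) auto
  also have "\<dots> = emeasure (QQ lam) A" using measure_pmf.emeasure_space_1[of "pmf_of_set ZZ"] by simp
  finally show "emeasure (distr MM (QQ lam) snd) A = emeasure (QQ lam) A" .
qed simp

lemma snd_meas: "snd \<in> measurable MM (QQ lam)"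
  unfolding MM_def by (rule measurable_snd)

lemma distr_QQ_comp: "distr (QQ lam) lborel (\<lambda>H. H ij) = density lborel (exponential_density lam)"
proof -
  interpret product_prob_space "\<lambda>_. Expo lam" UNIV using pps_QQ[OF lam] .
  have "distr (QQ lam) (Expo lam) (\<lambda>H. H ij) = Expo lam"
    unfolding QQ_def by (rule PiM_component) simp
  moreover have "distr (QQ lam) lborel (\<lambda>H. H ij) = distr (QQ lam) (Expo lam) (\<lambda>H. H ij)"
    by (rule distr_cong) (auto simp: Expo_def)
  ultimately show ?thesis by (simp add: Expo_def)
qed

lemma distributed_G: "distributed MM lborel (\<lambda>\<omega>. snd \<omega> ij) (exponential_density lam)"
  unfolding distributed_def
proof (intro conjI)
  have m: "(\<lambda>H. H ij) \<in> measurable (QQ lam) lborel"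
    unfolding measurable_lborel1 by (rule QQ_comp_meas)
  show "(\<lambda>\<omega>. snd \<omega> ij) \<in> measurable MM lborel"
    using measurable_compose[OF snd_meas m] by simp
  have "distr MM lborel (\<lambda>\<omega>. snd \<omega> ij) = distr (distr MM (QQ lam) snd) lborel (\<lambda>H. H ij)"
    by (subst distr_distr[OF m snd_meas]) (simp add: comp_def)
  also have "\<dots> = density lborel (exponential_density lam)"
    by (simp add: distr_snd_MM distr_QQ_comp)
  finally show "distr MM lborel (\<lambda>\<omega>. snd \<omega> ij) = density lborel (\<lambda>x. ennreal (exponential_density lam x))" .
  show "(\<lambda>x. ennreal (exponential_density lam x)) \<in> borel_measurable lborel"
    unfolding measurable_lborel2 by measurable
qed

lemma indep_G: "prob_space.indep_vars MM (\<lambda>_. borel) (\<lambda>ij \<omega>. snd \<omega> ij) UNIV"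
proof -
  interpret P: prob_space MM by (rule prob_MM)
  have rv: "P.random_variable borel (\<lambda>\<omega>. snd \<omega> ij)" for ij :: "nat \<times> nat"
    using distributed_G[of ij] unfolding distributed_def measurable_lborel1 by blast
  have e1: "distr MM borel (\<lambda>\<omega>. snd \<omega> i) = Expo lam" for i
  proof -
    have "distr MM borel (\<lambda>\<omega>. snd \<omega> i) = distr MM lborel (\<lambda>\<omega>. snd \<omega> i)"
      by (rule distr_cong) simp_all
    also have "\<dots> = Expo lam" using distributed_G[of i] unfolding distributed_def Expo_def by blast
    finally show ?thesis .
  qed
  have s: "sets (\<Pi>\<^sub>M i\<in>UNIV. borel) = sets (QQ lam)"
    unfolding QQ_def by (rule sets_PiM_cong) simp_all
  have "distr MM (\<Pi>\<^sub>M i\<in>UNIV. borel) (\<lambda>x. \<lambda>i\<in>UNIV. snd x i) = distr MM (QQ lam) snd"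
    by (rule distr_cong) (simp_all add: s restrict_def)
  also have "\<dots> = QQ lam" by (rule distr_snd_MM)
  also have "\<dots> = (\<Pi>\<^sub>M i\<in>UNIV. distr MM borel (\<lambda>\<omega>. snd \<omega> i))"
    by (simp only: e1 QQ_def)
  finally have eq: "distr MM (\<Pi>\<^sub>M i\<in>UNIV. borel) (\<lambda>x. \<lambda>i\<in>UNIV. snd x i) = (\<Pi>\<^sub>M i\<in>UNIV. distr MM borel (\<lambda>\<omega>. snd \<omega> i))" .
  show ?thesis
    by (subst P.indep_vars_iff_distr_eq_PiM) (use rv eq in auto)
qed

end


context CP begin

definition bet :: "nat list \<Rightarrow> nat list \<Rightarrow> (nat \<Rightarrow> bool list)" where
  "bet l u = enum (cnt u) (hd l mod bsz (cnt u))"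
definition w0f :: "nat list \<Rightarrow> nat list" where
  "w0f l = (if tl l \<in> multiset_perms n k then tl l else wfix)"
definition NoG :: "(nat\<times>nat \<Rightarrow> real) set" where
  "NoG = {G. Uo G = None}"

lemma NoG_sets: "NoG \<in> sets (QQ lam)"
proof -
  have "NoG = Uo -` {None} \<inter> space (QQ lam)" by (auto simp: NoG_def)
  then show ?thesis using Uo_meas by (simp add: measurable_sets_borel measurable_count_space_eq2_countable)
qed

lemma Fsel_eq: "Fsel l (Uo G) = (case Uo G of Some u \<Rightarrow> sel u (bet l u) | None \<Rightarrow> w0f l)"
  by (simp add: Fsel_def bet_def w0f_def split: option.splits)

lemma indicator_decomp:
  "(indicator {G. Fsel l (Uo G) = w} G :: ennreal) =
     (\<Sum>u\<in>Good. of_bool (sel u (bet l u) = w) * indicator {G. RR n u xx G} G) + of_bool (w0f l = w) * indicator NoG G"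
proof (cases "Uo G")
  case None
  then have "\<forall>u\<in>Good. \<not> RR n u xx G" by (auto simp: Uo_None Good_def)
  then show ?thesis using None by (simp add: Fsel_eq NoG_def indicator_def)
next
  case (Some u0)
  then have u0: "good u0" "RR n u0 xx G" by (auto simp: Uo_Some)
  then have u0G: "u0 \<in> Good" by (simp add: Good_def)
  have "(\<Sum>u\<in>Good. of_bool (sel u (bet l u) = w) * indicator {G. RR n u xx G} G :: ennreal)
      = of_bool (sel u0 (bet l u0) = w) * indicator {G. RR n u0 xx G} G"
  proof -
    let ?f = "\<lambda>u. of_bool (sel u (bet l u) = w) * indicator {G. RR n u xx G} G :: ennreal"
    have "(\<Sum>u\<in>Good. ?f u) = ?f u0 + (\<Sum>u\<in>Good-{u0}. ?f u)" by (rule sum.remove[OF Good_finite u0G])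
    moreover have "(\<Sum>u\<in>Good-{u0}. ?f u) = 0"
    proof (rule sum.neutral, intro ballI)
      fix u assume "u \<in> Good - {u0}"
      then have "\<not> RR n u xx G" using u0 RR_unique by blast
      then show "?f u = 0" by simp
    qed
    ultimately show ?thesis by simp
  qed
  then show ?thesis using Some u0 by (simp add: Fsel_eq NoG_def indicator_def)
qed

lemma emeasure_slice:
  "emeasure (QQ lam) {G. Fsel l (Uo G) = w} =
     (\<Sum>u\<in>Good. of_bool (sel u (bet l u) = w) * emeasure (QQ lam) {G. RR n u xx G}) + of_bool (w0f l = w) * emeasure (QQ lam) NoG"
proof -
  have m: "{G. Fsel l (Uo G) = w} \<in> sets (QQ lam)"
  proof -
    have "(\<lambda>G. Fsel l (Uo G)) \<in> measurable (QQ lam) (count_space UNIV)"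
      using measurable_compose[OF Uo_meas, of "Fsel l"] by simp
    then have "(\<lambda>G. Fsel l (Uo G)) -` {w} \<inter> space (QQ lam) \<in> sets (QQ lam)"
      by (rule measurable_sets) simp
    then show ?thesis by (simp add: vimage_def)
  qed
  have "emeasure (QQ lam) {G. Fsel l (Uo G) = w} = (\<integral>\<^sup>+G. indicator {G. Fsel l (Uo G) = w} G \<partial>QQ lam)"
    by (rule nn_integral_indicator[OF m, symmetric])
  also have "\<dots> = (\<integral>\<^sup>+G. (\<Sum>u\<in>Good. of_bool (sel u (bet l u) = w) * indicator {G. RR n u xx G} G) + of_bool (w0f l = w) * indicator NoG G \<partial>QQ lam)"
    by (simp only: indicator_decomp)
  also have "\<dots> = (\<integral>\<^sup>+G. (\<Sum>u\<in>Good. of_bool (sel u (bet l u) = w) * indicator {G. RR n u xx G} G) \<partial>QQ lam) + (\<integral>\<^sup>+G. of_bool (w0f l = w) * indicator NoG G \<partial>QQ lam)"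
    using RR_sets NoG_sets by (intro nn_integral_add) auto
  also have "(\<integral>\<^sup>+G. (\<Sum>u\<in>Good. of_bool (sel u (bet l u) = w) * indicator {G. RR n u xx G} G) \<partial>QQ lam)
      = (\<Sum>u\<in>Good. (\<integral>\<^sup>+G. of_bool (sel u (bet l u) = w) * indicator {G. RR n u xx G} G \<partial>QQ lam))"
    using RR_sets by (intro nn_integral_sum) auto
  also have "\<dots> = (\<Sum>u\<in>Good. of_bool (sel u (bet l u) = w) * emeasure (QQ lam) {G. RR n u xx G})"
    using RR_sets by (intro sum.cong refl nn_integral_cmult_indicator) auto
  also have "(\<integral>\<^sup>+G. of_bool (w0f l = w) * indicator NoG G \<partial>QQ lam) = of_bool (w0f l = w) * emeasure (QQ lam) NoG"
    using NoG_sets by (rule nn_integral_cmult_indicator)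
  finally show ?thesis .
qed

end


lemma card_filter_sum: "finite A \<Longrightarrow> card {x\<in>A. P x} = (\<Sum>x\<in>A. if P x then 1 else 0 :: nat)"
  by (simp add: sum.inter_filter[symmetric])

lemma sum_of_bool_ennreal: "finite A \<Longrightarrow> (\<Sum>x\<in>A. of_bool (P x) * c) = of_nat (card {x\<in>A. P x}) * (c::ennreal)"
proof -
  assume A: "finite A"
  have "(\<Sum>x\<in>A. of_bool (P x) * c) = (\<Sum>x\<in>A. if P x then c else 0)" by (intro sum.cong) auto
  also have "\<dots> = (\<Sum>x\<in>{x\<in>A. P x}. c)" by (rule sum.inter_filter[OF A, symmetric])
  also have "\<dots> = of_nat (card {x\<in>A. P x}) * c" by simp
  finally show ?thesis .
qed

context CP begin

lemma ZZ_hd: "card {l\<in>ZZ. P (hd l)} = card {r\<in>{0..<KK}. P r} * card (multiset_perms n k)"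
proof -
  have "{l\<in>ZZ. P (hd l)} = (\<lambda>(r,w0). r # w0) ` ({r\<in>{0..<KK}. P r} \<times> multiset_perms n k)"
    by (auto simp: ZZ_def)
  then show ?thesis by (simp add: card_image[OF inj_cons] card_cartesian_product)
qed

lemma ZZ_w0: assumes w: "w \<in> multiset_perms n k" shows "card {l\<in>ZZ. w0f l = w} = KK"
proof -
  have "{l\<in>ZZ. w0f l = w} = (\<lambda>r. r # w) ` {0..<KK}"
    using w by (auto simp: ZZ_def w0f_def)
  then show ?thesis by (simp add: card_image inj_on_def)
qed

lemma count_mod:
  assumes c: "c \<in> Cset"
  shows "card {r\<in>{0..<KK}. P (r mod bsz c)} = (KK div bsz c) * card {r\<in>{0..<bsz c}. P r}"
proof -
  define b where "b = bsz c"
  define m where "m = KK div b"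
  have KK: "KK = b * m" using bsz_dvd[OF c] by (simp add: b_def m_def)
  have "card {r\<in>{0..<KK}. P (r mod b)} = (\<Sum>r\<in>{0..<KK}. if P (r mod b) then 1 else 0)"
    by (rule card_filter_sum) simp
  also have "\<dots> = (\<Sum>r\<in>{0..<b * m}. (\<lambda>x. if P x then 1 else 0) (r mod b))"
    by (simp only: KK)
  also have "\<dots> = m * (\<Sum>r\<in>{0..<b}. if P r then 1 else 0)"
    by (rule sum_mod_blocks)
  also have "(\<Sum>r\<in>{0..<b}. if P r then 1 else 0) = card {r\<in>{0..<b}. P r}"
    by (rule card_filter_sum[symmetric]) simp
  finally show ?thesis by (simp add: b_def m_def)
qed

lemma count_enum:
  assumes c: "c \<in> Cset"
  shows "card {r\<in>{0..<bsz c}. P (enum c r)} = card {\<beta>\<in>Bc n k c. P \<beta>}"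
proof -
  have b: "bij_betw (enum c) {0..<bsz c} (Bc n k c)" by (rule enum_bij)
  have "enum c ` {r\<in>{0..<bsz c}. P (enum c r)} = {\<beta>\<in>Bc n k c. P \<beta>}"
  proof
    show "enum c ` {r\<in>{0..<bsz c}. P (enum c r)} \<subseteq> {\<beta>\<in>Bc n k c. P \<beta>}"
      using b by (auto simp: bij_betw_def)
    show "{\<beta>\<in>Bc n k c. P \<beta>} \<subseteq> enum c ` {r\<in>{0..<bsz c}. P (enum c r)}"
    proof
      fix x assume x: "x \<in> {\<beta>\<in>Bc n k c. P \<beta>}"
      then have "x \<in> enum c ` {0..<bsz c}" using b by (simp add: bij_betw_def)
      then obtain r where "r \<in> {0..<bsz c}" "x = enum c r" by blast
      then show "x \<in> enum c ` {r\<in>{0..<bsz c}. P (enum c r)}" using x by auto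
    qed
  qed
  moreover have "inj_on (enum c) {r\<in>{0..<bsz c}. P (enum c r)}"
    using b by (auto simp: bij_betw_def intro: inj_on_subset)
  ultimately show ?thesis by (metis card_image)
qed

lemma ZZ_sel:
  assumes u: "good u"
  shows "card {l\<in>ZZ. sel u (bet l u) = w} = card (multiset_perms n k) * (KK div bsz (cnt u)) * card {\<beta>\<in>Bc n k (cnt u). sel u \<beta> = w}"
proof -
  have c: "cnt u \<in> Cset" using u by (auto simp: Cset_def Good_def)
  have "card {l\<in>ZZ. sel u (bet l u) = w} = card {r\<in>{0..<KK}. sel u (enum (cnt u) (r mod bsz (cnt u))) = w} * card (multiset_perms n k)"
    unfolding bet_def by (rule ZZ_hd)
  also have "card {r\<in>{0..<KK}. sel u (enum (cnt u) (r mod bsz (cnt u))) = w} = (KK div bsz (cnt u)) * card {r\<in>{0..<bsz (cnt u)}. sel u (enum (cnt u) r) = w}"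
    by (rule count_mod[OF c])
  also have "card {r\<in>{0..<bsz (cnt u)}. sel u (enum (cnt u) r) = w} = card {\<beta>\<in>Bc n k (cnt u). sel u \<beta> = w}"
    by (rule count_enum[OF c])
  finally show ?thesis by (simp add: ac_simps)
qed

definition qc :: "(nat \<Rightarrow> nat) \<Rightarrow> ennreal" where
  "qc c = ennreal (qf n lam (\<Sum>i\<in>{1..n}. c i) xx)"

lemma qu_qc: "c \<in> Cset \<Longrightarrow> u \<in> Wc n c \<Longrightarrow> emeasure (QQ lam) {G. RR n u xx G} = qc c"
  unfolding qc_def using Wc_length[of u n c]
  by (subst RR_prob[OF lam xx_nonneg]) (auto simp: Wc_def)

lemma Good_UN: "Good = (\<Union>c\<in>Cset. Wc n c)"
proof
  show "Good \<subseteq> (\<Union>c\<in>Cset. Wc n c)"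
    by (auto simp: Cset_def Good_def intro: good_Wc)
  show "(\<Union>c\<in>Cset. Wc n c) \<subseteq> Good"
    using Wc_good by (auto simp: Good_def)
qed

lemma sum_Good:
  "(\<Sum>u\<in>Good. f u) = (\<Sum>c\<in>Cset. \<Sum>u\<in>Wc n c. f u)"
proof -
  have "(\<Sum>u\<in>(\<Union>c\<in>Cset. Wc n c). f u) = (\<Sum>c\<in>Cset. \<Sum>u\<in>Wc n c. f u)"
  proof (rule sum.UNION_disjoint)
    show "finite Cset" by (rule Cset_finite)
    show "\<forall>c\<in>Cset. finite (Wc n c)" using Wc_finite by auto
    show "\<forall>c\<in>Cset. \<forall>c'\<in>Cset. c \<noteq> c' \<longrightarrow> Wc n c \<inter> Wc n c' = {}"
      using Wc_good by blast
  qed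
  then show ?thesis by (simp add: Good_UN)
qed

lemma fiber_Sigma: "fiber n k c w = Sigma (Wc n c) (\<lambda>u. {\<beta>\<in>Bc n k c. sel u \<beta> = w})"
  by (auto simp: fiber_def)

lemma card_fiber: "card (fiber n k c w) = (\<Sum>u\<in>Wc n c. card {\<beta>\<in>Bc n k c. sel u \<beta> = w})"
  unfolding fiber_Sigma by (rule card_SigmaI) (auto intro!: Wc_finite finite_subset[OF _ Bc_finite])

lemma PS_formula:
  assumes w: "w \<in> multiset_perms n k"
  shows "emeasure MM {\<omega>. SS \<omega> = w} =
    ((\<Sum>c\<in>Cset. qc c * of_nat (card (multiset_perms n k) * (KK div bsz c) * card (fiber n k c w)))
      + emeasure (QQ lam) NoG * of_nat KK) / of_nat (card ZZ)"
proof -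
  interpret Q: prob_space "QQ lam" by (rule prob_QQ[OF lam])
  have X: "{\<omega>. SS \<omega> = w} \<in> sets (measure_pmf (pmf_of_set ZZ) \<Otimes>\<^sub>M QQ lam)"
  proof -
    have "SS -` {w} \<inter> space MM \<in> sets MM" by (rule measurable_sets[OF SS_meas]) simp
    then show ?thesis by (simp add: MM_def vimage_def space_pair_measure)
  qed
  have "emeasure MM {\<omega>. SS \<omega> = w} = (\<integral>\<^sup>+l. emeasure (QQ lam) (Pair l -` {\<omega>. SS \<omega> = w}) \<partial>measure_pmf (pmf_of_set ZZ))"
    unfolding MM_def by (rule Q.emeasure_pair_measure_alt[OF X])
  also have "\<dots> = (\<integral>\<^sup>+l. emeasure (QQ lam) {G. Fsel l (Uo G) = w} \<partial>measure_pmf (pmf_of_set ZZ))"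
    by (simp add: SS_def vimage_def)
  also have "\<dots> = (\<Sum>l\<in>ZZ. emeasure (QQ lam) {G. Fsel l (Uo G) = w}) / of_nat (card ZZ)"
    by (rule nn_integral_pmf_of_set[OF ZZ_ne ZZ_finite])
  also have "(\<Sum>l\<in>ZZ. emeasure (QQ lam) {G. Fsel l (Uo G) = w})
      = (\<Sum>u\<in>Good. \<Sum>l\<in>ZZ. of_bool (sel u (bet l u) = w) * emeasure (QQ lam) {G. RR n u xx G})
        + (\<Sum>l\<in>ZZ. of_bool (w0f l = w) * emeasure (QQ lam) NoG)"
    by (simp add: emeasure_slice sum.distrib sum.swap[of _ ZZ Good])
  also have "(\<Sum>l\<in>ZZ. of_bool (w0f l = w) * emeasure (QQ lam) NoG) = emeasure (QQ lam) NoG * of_nat KK"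
    by (subst sum_of_bool_ennreal[OF ZZ_finite]) (simp add: ZZ_w0[OF w] mult.commute)
  also have "(\<Sum>u\<in>Good. \<Sum>l\<in>ZZ. of_bool (sel u (bet l u) = w) * emeasure (QQ lam) {G. RR n u xx G})
      = (\<Sum>u\<in>Good. emeasure (QQ lam) {G. RR n u xx G} * of_nat (card (multiset_perms n k) * (KK div bsz (cnt u)) * card {\<beta>\<in>Bc n k (cnt u). sel u \<beta> = w}))"
    by (intro sum.cong refl, subst sum_of_bool_ennreal[OF ZZ_finite]) (simp add: ZZ_sel Good_def mult.commute)
  also have "\<dots> = (\<Sum>c\<in>Cset. \<Sum>u\<in>Wc n c. emeasure (QQ lam) {G. RR n u xx G} * of_nat (card (multiset_perms n k) * (KK div bsz (cnt u)) * card {\<beta>\<in>Bc n k (cnt u). sel u \<beta> = w}))"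
    by (rule sum_Good)
  also have "\<dots> = (\<Sum>c\<in>Cset. \<Sum>u\<in>Wc n c. qc c * of_nat (card (multiset_perms n k) * (KK div bsz c)) * of_nat (card {\<beta>\<in>Bc n k c. sel u \<beta> = w}))"
    by (intro sum.cong refl) (simp add: qu_qc Wc_good mult.assoc)
  also have "\<dots> = (\<Sum>c\<in>Cset. qc c * of_nat (card (multiset_perms n k) * (KK div bsz c) * card (fiber n k c w)))"
    by (intro sum.cong refl) (simp add: card_fiber sum_distrib_left mult.assoc)
  finally show ?thesis .
qed

lemma PS_eq:
  assumes "w \<in> multiset_perms n k" "w' \<in> multiset_perms n k"
  shows "emeasure MM {\<omega>. SS \<omega> = w} = emeasure MM {\<omega>. SS \<omega> = w'}"
  unfolding PS_formula[OF assms(1)] PS_formula[OF assms(2)] fiber_card_eq[OF assms] ..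

end


context CP begin

lemma SS_vimage: "SS -` A = (\<Union>w\<in>A \<inter> multiset_perms n k. {\<omega>. SS \<omega> = w})"
  using SS_MP by auto

lemma SS_sets: "{\<omega>. SS \<omega> = w} \<in> sets MM"
proof -
  have "SS -` {w} \<inter> space MM \<in> sets MM" by (rule measurable_sets[OF SS_meas]) simp
  then show ?thesis by (simp add: vimage_def)
qed

lemma emeasure_SS_A:
  "emeasure MM (SS -` A) = (\<Sum>w\<in>A \<inter> multiset_perms n k. emeasure MM {\<omega>. SS \<omega> = w})"
  unfolding SS_vimage
  by (rule sum_emeasure[symmetric]) (auto simp: disjoint_family_on_def SS_sets intro: MP_finite)

lemma SS_uniform: "distr MM (count_space UNIV) SS = measure_pmf (pmf_of_set (multiset_perms n k))"
proof (rule measure_eqI)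
  interpret P: prob_space MM by (rule prob_MM)
  define p where "p = emeasure MM {\<omega>. SS \<omega> = wfix}"
  have wf: "wfix \<in> multiset_perms n k" by (simp add: wfix_def MP_ne)
  have pw: "w \<in> multiset_perms n k \<Longrightarrow> emeasure MM {\<omega>. SS \<omega> = w} = p" for w
    unfolding p_def by (rule PS_eq[OF _ wf])
  have sumA: "emeasure MM (SS -` A) = of_nat (card (A \<inter> multiset_perms n k)) * p" for A
    unfolding emeasure_SS_A by (simp add: pw)
  have "1 = emeasure MM (SS -` UNIV)" using P.emeasure_space_1 by simp
  also have "\<dots> = of_nat (card (multiset_perms n k)) * p" using sumA[of UNIV] by simp
  finally have one: "of_nat (card (multiset_perms n k)) * p = 1" by simp
  have cpos: "(of_nat (card (multiset_perms n k)) :: ennreal) \<noteq> 0"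
    using MP_finite MP_ne[of k n] by (auto simp: card_eq_0_iff)
  have p: "p = 1 / of_nat (card (multiset_perms n k))"
  proof -
    have "p = (p * of_nat (card (multiset_perms n k))) / of_nat (card (multiset_perms n k))"
      using cpos by (simp add: ennreal_mult_divide_eq)
    then show ?thesis using one by (simp add: mult.commute)
  qed
  fix A assume "A \<in> sets (distr MM (count_space UNIV) SS)"
  have "emeasure (distr MM (count_space UNIV) SS) A = emeasure MM (SS -` A)"
    by (subst emeasure_distr[OF SS_meas]) auto
  also have "\<dots> = of_nat (card (A \<inter> multiset_perms n k)) / of_nat (card (multiset_perms n k))"
    by (simp add: sumA p ennreal_times_divide)
  also have "\<dots> = ennreal (real (card (A \<inter> multiset_perms n k)) / real (card (multiset_perms n k)))"
    using cpos by (simp add: ennreal_of_nat_eq_real_of_nat divide_ennreal)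
  also have "\<dots> = emeasure (measure_pmf (pmf_of_set (multiset_perms n k))) A"
    by (subst emeasure_pmf_of_set[OF _ MP_finite]) (use MP_ne[of k n] in \<open>auto simp: Int_commute\<close>)
  finally show "emeasure (distr MM (count_space UNIV) SS) A = emeasure (measure_pmf (pmf_of_set (multiset_perms n k))) A" .
qed simp

lemma ineq_pt:
  assumes pos: "\<forall>ij. 0 < G ij" and ex: "\<exists>u. set u \<subseteq> {1..n} \<and> RR n u xx G"
  shows "real (max_chain_len (word_points (SS (l, G))))
          \<le> real (max_chain_len (ppp_window G (real (n * k)) n))
            + real (n * k) * (1 - of_bool (\<forall>i\<in>{1..n}. card {p \<in> ppp_window G (real (n * k)) n. snd p = i} \<ge> k))"
proof -
  from ex obtain u where u: "set u \<subseteq> {1..n}" and R: "RR n u xx G" by blast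
  have R': "RR n u (real (n*k)) G" using R by (simp add: xx_def)
  have win: "ppp_window G (real (n*k)) n = set (pts n u G)" by (rule window_pts[OF pos R'])
  have props: "sorted_wrt (\<lambda>p q. fst p < fst q) (pts n u G)" "map snd (pts n u G) = u"
    using pts_props[OF pos R'] by auto
  have fin: "finite (ppp_window G (real (n*k)) n)" unfolding win by (rule finite_set)
  have Lle: "max_chain_len (word_points (SS (l, G))) \<le> n * k"
    using max_chain_word_le_length[of "SS (l,G)"] SS_MP[of "(l,G)"] by (simp add: multiset_perms_def mult.commute)
  show ?thesis
  proof (cases "\<forall>i\<in>{1..n}. card {p \<in> ppp_window G (real (n * k)) n. snd p = i} \<ge> k")
    case False
    then have ob: "(of_bool (\<forall>i\<in>{1..n}. card {p \<in> ppp_window G (real (n * k)) n. snd p = i} \<ge> k) :: real) = 0"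
      by simp
    have h: "real (max_chain_len (word_points (SS (l, G)))) \<le> real (n * k)"
      using Lle by (simp only: of_nat_le_iff)
    show ?thesis unfolding ob using h by simp
  next
    case True
    have cnt_ge: "\<forall>i\<in>{1..n}. k \<le> count (mset u) i"
      using True card_row[OF pos R'] by simp
    have "max_chain_len (word_points (SS (l, G))) \<le> max_chain_len (ppp_window G (real (n * k)) n)"
    proof (cases "good u")
      case True
      then have "Uo G = Some u" using R by (simp add: Uo_Some)
      then have "SS (l, G) = sel u (bet l u)" by (simp add: SS_def Fsel_def bet_def)
      also have "\<dots> = subl (map snd (pts n u G)) (marks u (bet l u))" by (simp add: sel_def props(2))
      finally have "SS (l, G) = subl (map snd (pts n u G)) (marks u (bet l u))" .
      then show ?thesis using max_chain_subl[OF props(1) fin] win by simp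
    next
      case False
      then obtain i where i: "i \<in> {1..n}" "n * k < count (mset u) i"
        using u cnt_ge by (auto simp: good_def not_le)
      have "count (mset (map snd (pts n u G))) i \<le> max_chain_len (ppp_window G (real (n * k)) n)"
        using count_le_max_chain[OF props(1) fin] win by simp
      then show ?thesis using i Lle props(2) by simp
    qed
    then show ?thesis using True by simp
  qed
qed

lemma AE_pos: "AE G in QQ lam. \<forall>ij. 0 < G ij"
proof -
  interpret product_prob_space "\<lambda>_. Expo lam" UNIV using pps_QQ[OF lam] .
  have e: "AE x in Expo lam. 0 < x"
    unfolding Expo_def
  proof (subst AE_density)
    show "AE x in lborel. 0 < ennreal (exponential_density lam x) \<longrightarrow> 0 < x"
      using AE_lborel_singleton[of 0] by eventually_elim (auto simp: exponential_density_def)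
  qed simp
  show ?thesis
    unfolding QQ_def by (subst AE_all_countable) (auto intro: AE_component[OF _ e])
qed

lemma AE_ineq:
  "AE \<omega> in MM. real (max_chain_len (word_points (SS \<omega>)))
          \<le> real (max_chain_len (ppp_window (snd \<omega>) (real (n * k)) n))
            + real (n * k) * (1 - of_bool (\<forall>i\<in>{1..n}. card {p \<in> ppp_window (snd \<omega>) (real (n * k)) n. snd p = i} \<ge> k))"
proof -
  have "AE G in QQ lam. (\<forall>ij. 0 < G ij) \<and> (\<exists>u. set u \<subseteq> {1..n} \<and> RR n u xx G)"
    using AE_pos RR_cover[OF lam xx_nonneg, of n] by eventually_elim blast
  then have "AE G in distr MM (QQ lam) snd. (\<forall>ij. 0 < G ij) \<and> (\<exists>u. set u \<subseteq> {1..n} \<and> RR n u xx G)"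
    by (subst distr_snd_MM)
  then have "AE \<omega> in MM. (\<forall>ij. 0 < snd \<omega> ij) \<and> (\<exists>u. set u \<subseteq> {1..n} \<and> RR n u xx (snd \<omega>))"
    by (rule AE_distrD[OF snd_meas])
  then show ?thesis
  proof eventually_elim
    case (elim \<omega>)
    then have a: "\<forall>ij. 0 < snd \<omega> ij" and b: "\<exists>u. set u \<subseteq> {1..n} \<and> RR n u xx (snd \<omega>)" by blast+
    from ineq_pt[OF a b, of "fst \<omega>"] show ?case by (simp only: prod.collapse)
  qed
qed

end


theorem mainTheorem10:
  fixes n k :: nat and lam :: real
  assumes "n \<ge> 1" and "k \<ge> 1" and "lam > 0"
  shows "\<exists>(M :: (nat list \<times> (nat \<times> nat \<Rightarrow> real)) measure)
            (S :: nat list \<times> (nat \<times> nat \<Rightarrow> real) \<Rightarrow> nat list)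
            (G :: nat list \<times> (nat \<times> nat \<Rightarrow> real) \<Rightarrow> nat \<times> nat \<Rightarrow> real).
           prob_space M
         \<and> S \<in> measurable M (count_space UNIV)
         \<and> distr M (count_space UNIV) S = measure_pmf (pmf_of_set (multiset_perms n k))
         \<and> (\<forall>ij. distributed M lborel (\<lambda>\<omega>. G \<omega> ij) (exponential_density lam))
         \<and> prob_space.indep_vars M (\<lambda>_. borel) (\<lambda>ij \<omega>. G \<omega> ij) UNIV
         \<and> (AE \<omega> in M.
              real (max_chain_len (word_points (S \<omega>)))
                \<le> real (max_chain_len (ppp_window (G \<omega>) (real (n * k)) n))
                  + real (n * k) * (1 - of_bool (\<forall>i\<in>{1..n}.
                      card {p \<in> ppp_window (G \<omega>) (real (n * k)) n. snd p = i} \<ge> k)))"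
proof -
  interpret CP n k lam using assms by unfold_locales auto
  show ?thesis
  proof (intro exI conjI)
    show "prob_space MM" by (rule prob_MM)
    show "SS \<in> measurable MM (count_space UNIV)" by (rule SS_meas)
    show "distr MM (count_space UNIV) SS = measure_pmf (pmf_of_set (multiset_perms n k))" by (rule SS_uniform)
    show "\<forall>ij. distributed MM lborel (\<lambda>\<omega>. snd \<omega> ij) (exponential_density lam)" using distributed_G by blast
    show "prob_space.indep_vars MM (\<lambda>_. borel) (\<lambda>ij \<omega>. snd \<omega> ij) UNIV" by (rule indep_G)
    show "AE \<omega> in MM.
              real (max_chain_len (word_points (SS \<omega>)))
                \<le> real (max_chain_len (ppp_window (snd \<omega>) (real (n * k)) n))
                  + real (n * k) * (1 - of_bool (\<forall>i\<in>{1..n}.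
                      card {p \<in> ppp_window (snd \<omega>) (real (n * k)) n. snd p = i} \<ge> k))"
      by (rule AE_ineq)
  qed
qed


end
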